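(* The functions $Z_{ij}^{k+1,l+1}(x,y)$ for $i=-k,\dots,g-1$, $j=-l,\dots,h-1$, together with $Z_i^{k+1}(x,y)$ for $i=-k,\dots,g-1$ and $Z_j^{l+1}(x,y)$ for $j=-l,\dots,h-1$, form a basis of the vector space $\mathcal Z_{kl}^{\Delta\lambda,\Delta\mu}(\Omega)$. In particular $$\dim \mathcal Z_{kl}^{\Delta\lambda,\Delta\mu}(\Omega)=(g+k+1)(h+l+1)-1=(g+k)(h+l)+g+k+h+l.$$
   Context: Let $\Omega=[a,b]\times[c,d]\subset\mathbb R^2$ with $a<b$, $c<d$. Fix integers $g,h\ge 0$ and degrees $k,l\in\mathbb N_0$. Take knots $a=\lambda_0<\lambda_1<\dots<\lambda_g<\lambda_{g+1}=b$ and $c=\mu_0<\mu_1<\dots<\mu_h<\mu_{h+1}=d$, extended by coincident boundary knots $\lambda_{-k}=\dots=\lambda_0=a$, $\lambda_{g+1}=\dots=\lambda_{g+k+1}=b$, and $\mu_{-l}=\dots=\mu_0=c$, $\mu_{h+1}=\dots=\mu_{h+l+1}=d$. For $i=-k,\dots,g$ let $B_i^{k+1}(x)$ denote the (normalized) B-spline of degree $k$ with knots $\lambda_i,\dots,\lambda_{i+k+1}$, so that $\sum_{i=-k}^g B_i^{k+1}(x)=1$ on $[a,b]$; similarly $B_j^{l+1}(y)$, $j=-l,\dots,h$, is the B-spline of degree $l$ with knots $\mu_j,\dots,\mu_{j+l+1}$. Let $\mathcal S_{kl}^{\Delta\lambda,\Delta\mu}(\Omega)$ be the space of tensor product splines on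 $\Omega$ of degree $k$ in $x$ (knots $\lambda$) and degree $l$ in $y$ (knots $\mu$), i.e. the span of the functions $B_i^{k+1}(x)B_j^{l+1}(y)$, which has dimension $(g+k+1)(h+l+1)$. Define $\mathcal Z_{kl}^{\Delta\lambda,\Delta\mu}(\Omega)=\{s\in\mathcal S_{kl}^{\Delta\lambda,\Delta\mu}(\Omega):\iint_\Omega s(x,y)\,dx\,dy=0\}$. The univariate ZB-splines are, for $i=-k,\dots,g-1$, $$Z_i^{k+1}(x)=(k+1)\Big(\frac{B_i^{k+1}(x)}{\lambda_{i+k+1}-\lambda_i}-\frac{B_{i+1}^{k+1}(x)}{\lambda_{i+k+2}-\lambda_{i+1}}\Big)$$ (equivalently, the derivative of the degree-$(k+1)$ B-spline with knots $\lambda_i,\dots,\lambda_{i+k+2}$), and analogously $Z_j^{l+1}(y)=(l+1)\big(\frac{B_j^{l+1}(y)}{\mu_{j+l+1}-\mu_j}-\frac{B_{j+1}^{l+1}(y)}{\mu_{j+l+2}-\mu_{j+1}}\big)$ for $j=-l,\dots,h-1$. The bivariate ZB-splines are $Z_{ij}^{k+1,l+1}(x,y)=Z_i^{k+1}(x)Z_j^{l+1}(y)$, $Z_i^{k+1}(x,y)=Z_i^{k+1}(x)$ and $Z_j^{l+1}(x,y)=Z_j^{l+1}(y)$, all regarded as functions on $\Omega$. *)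

theory Defs
  imports "HOL-Analysis.Analysis" "HOL-Library.Function_Algebras"
begin

definition ext_knots :: "(int \<Rightarrow> real) \<Rightarrow> real \<Rightarrow> real \<Rightarrow> nat \<Rightarrow> nat \<Rightarrow> bool" where
  "ext_knots t lo hi g k \<longleftrightarrow>
     lo < hi \<and> t 0 = lo \<and> t (int g + 1) = hi \<and>
     (\<forall>i \<in> {0..int g}. t i < t (i + 1)) \<and>
     (\<forall>i \<in> {- int k..0}. t i = lo) \<and>
     (\<forall>i \<in> {int g + 1..int g + int k + 1}. t i = hi)"

text \<open>Normalized B-spline of degree m with knots t i, ..., t (i+m+1) (Cox--de Boor
  recursion, with the convention x / 0 = 0).  The degree-0 B-splines are indicators of
  half-open knot intervals [t i, t (i+1)), except that the last nonempty interval
  ending at the right endpoint hi is closed, so that the B-splines sum to 1 on the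
  whole closed interval.\<close>
fun bspline :: "(int \<Rightarrow> real) \<Rightarrow> real \<Rightarrow> nat \<Rightarrow> int \<Rightarrow> real \<Rightarrow> real" where
  "bspline t hi 0 i x =
     (if t i < t (i + 1) \<and> t i \<le> x \<and> (x < t (i + 1) \<or> (x = hi \<and> t (i + 1) = hi))
      then 1 else 0)"
| "bspline t hi (Suc m) i x =
     (x - t i) / (t (i + int m + 1) - t i) * bspline t hi m i x
     + (t (i + int m + 2) - x) / (t (i + int m + 2) - t (i + 1)) * bspline t hi m (i + 1) x"

definition zbspline :: "(int \<Rightarrow> real) \<Rightarrow> real \<Rightarrow> nat \<Rightarrow> int \<Rightarrow> real \<Rightarrow> real" where
  "zbspline t hi k i x =
     (real k + 1) * (bspline t hi k i x / (t (i + int k + 1) - t i)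
                     - bspline t hi k (i + 1) x / (t (i + int k + 2) - t (i + 1)))"

text \<open>Functions on the rectangle Omega are represented by functions on real \<times> real
  vanishing outside Omega.\<close>
definition restr :: "real \<Rightarrow> real \<Rightarrow> real \<Rightarrow> real \<Rightarrow> (real \<times> real \<Rightarrow> real) \<Rightarrow> (real \<times> real \<Rightarrow> real)" where
  "restr a b c d f = (\<lambda>p. if p \<in> {a..b} \<times> {c..d} then f p else 0)"

definition fscale :: "real \<Rightarrow> (real \<times> real \<Rightarrow> real) \<Rightarrow> (real \<times> real \<Rightarrow> real)" where
  "fscale r f = (\<lambda>p. r * f p)"

definition spline_space ::
  "real \<Rightarrow> real \<Rightarrow> real \<Rightarrow> real \<Rightarrow> nat \<Rightarrow> nat \<Rightarrow> nat \<Rightarrow> nat \<Rightarrow>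
   (int \<Rightarrow> real) \<Rightarrow> (int \<Rightarrow> real) \<Rightarrow> (real \<times> real \<Rightarrow> real) set" where
  "spline_space a b c d g h k l lam mu =
     {s. \<exists>coef :: int \<Rightarrow> int \<Rightarrow> real.
          s = restr a b c d (\<lambda>(x, y). \<Sum>i \<in> {- int k..int g}. \<Sum>j \<in> {- int l..int h}.
                 coef i j * bspline lam b k i x * bspline mu d l j y)}"

definition zero_int_space ::
  "real \<Rightarrow> real \<Rightarrow> real \<Rightarrow> real \<Rightarrow> nat \<Rightarrow> nat \<Rightarrow> nat \<Rightarrow> nat \<Rightarrow>
   (int \<Rightarrow> real) \<Rightarrow> (int \<Rightarrow> real) \<Rightarrow> (real \<times> real \<Rightarrow> real) set" where
  "zero_int_space a b c d g h k l lam mu =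
     {s \<in> spline_space a b c d g h k l lam mu. integral ({a..b} \<times> {c..d}) s = 0}"

text \<open>The bivariate ZB-splines, indexed by Inl (i,j) for Z_ij^{k+1,l+1},
  Inr (Inl i) for Z_i^{k+1}(x,y) and Inr (Inr j) for Z_j^{l+1}(x,y).\<close>
definition zb_index :: "nat \<Rightarrow> nat \<Rightarrow> nat \<Rightarrow> nat \<Rightarrow> (int \<times> int + int + int) set" where
  "zb_index g h k l =
     Inl ` ({- int k..int g - 1} \<times> {- int l..int h - 1})
     \<union> (Inr \<circ> Inl) ` {- int k..int g - 1}
     \<union> (Inr \<circ> Inr) ` {- int l..int h - 1}"

fun zb_fun ::
  "real \<Rightarrow> real \<Rightarrow> real \<Rightarrow> real \<Rightarrow> nat \<Rightarrow> nat \<Rightarrow> (int \<Rightarrow> real) \<Rightarrow> (int \<Rightarrow> real) \<Rightarrow>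
   (int \<times> int + int + int) \<Rightarrow> (real \<times> real \<Rightarrow> real)" where
  "zb_fun a b c d k l lam mu (Inl (i, j)) =
     restr a b c d (\<lambda>(x, y). zbspline lam b k i x * zbspline mu d l j y)"
| "zb_fun a b c d k l lam mu (Inr (Inl i)) =
     restr a b c d (\<lambda>(x, y). zbspline lam b k i x)"
| "zb_fun a b c d k l lam mu (Inr (Inr j)) =
     restr a b c d (\<lambda>(x, y). zbspline mu d l j y)"

end

theory Submission
  imports Defs
begin
lemma deriv_alg:
  fixes p0 p1 p2 q0 q1 q2 x b0 b1 b2 :: real
  assumes "p0 \<le> p1" "p1 \<le> q0" "q0 \<le> q1" "q1 \<le> q2" "p1 \<le> p2" "p2 \<le> q1"
  shows "(x-p0)/(q1-p0) * (b0/(q0-p0) - b1/(q1-p1)) + (q2-x)/(q2-p1) * (b1/(q1-p1) - b2/(q2-p2))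
       = ((x-p0)/(q0-p0) * b0 + (q1-x)/(q1-p1) * b1)/(q1-p0) - ((x-p1)/(q1-p1) * b1 + (q2-x)/(q2-p2) * b2)/(q2-p1)"
proof (cases "q1 = p1")
  case True
  then show ?thesis by (simp add: field_simps)
next
  case False
  then have h1: "q1 - p1 \<noteq> 0" "q1 - p0 \<noteq> 0" "q2 - p1 \<noteq> 0" using assms by auto
  have e1: "(x-p0)/(q1-p0) * (b0/(q0-p0)) = ((x-p0)/(q0-p0) * b0)/(q1-p0)" by simp
  have e2: "(q2-x)/(q2-p1) * (b2/(q2-p2)) = ((q2-x)/(q2-p2) * b2)/(q2-p1)" by simp
  have f1: "-(x-p0)/(q1-p0) - (q1-x)/(q1-p0) = -1"
  proof -
    have "-(x-p0)/(q1-p0) - (q1-x)/(q1-p0) = (-(x-p0) - (q1-x))/(q1-p0)" by (simp add: diff_divide_distrib)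
    also have "(-(x-p0) - (q1-x)) = -(q1-p0)" by simp
    also have "-(q1-p0)/(q1-p0) = -1" using h1 by (simp only: divide_minus_left divide_self) simp
    finally show ?thesis .
  qed
  have f2: "(q2-x)/(q2-p1) + (x-p1)/(q2-p1) = 1"
  proof -
    have "(q2-x)/(q2-p1) + (x-p1)/(q2-p1) = ((q2-x) + (x-p1))/(q2-p1)" by (rule add_divide_distrib[symmetric])
    also have "((q2-x) + (x-p1)) = (q2-p1)" by simp
    also have "(q2-p1)/(q2-p1) = 1" using h1 by simp
    finally show ?thesis .
  qed
  have e3: "-(x-p0)/(q1-p0) * (b1/(q1-p1)) + (q2-x)/(q2-p1) * (b1/(q1-p1))
          = ((q1-x)/(q1-p1) * b1)/(q1-p0) - ((x-p1)/(q1-p1) * b1)/(q2-p1)"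
  proof -
    have "-(x-p0)/(q1-p0) * (b1/(q1-p1)) + (q2-x)/(q2-p1) * (b1/(q1-p1))
        - (((q1-x)/(q1-p1) * b1)/(q1-p0) - ((x-p1)/(q1-p1) * b1)/(q2-p1))
        = (b1/(q1-p1)) * ((-(x-p0)/(q1-p0) - (q1-x)/(q1-p0)) + ((q2-x)/(q2-p1) + (x-p1)/(q2-p1)))"
      by (simp add: algebra_simps)
    also have "\<dots> = 0" using f1 f2 by simp
    finally show ?thesis by simp
  qed
  show ?thesis using e1 e2 e3 by (simp add: algebra_simps add_divide_distrib diff_divide_distrib)
qed

fun bp :: "(int \<Rightarrow> real) \<Rightarrow> int \<Rightarrow> nat \<Rightarrow> int \<Rightarrow> real \<Rightarrow> real" where
  "bp t r 0 i x = (if i = r then 1 else 0)"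
| "bp t r (Suc m) i x =
     (x - t i) / (t (i + int m + 1) - t i) * bp t r m i x
     + (t (i + int m + 2) - x) / (t (i + int m + 2) - t (i + 1)) * bp t r m (i + 1) x"

locale knots =
  fixes t :: "int \<Rightarrow> real" and g :: nat and lo hi :: real
  assumes t_lo: "\<And>j. j \<le> 0 \<Longrightarrow> t j = lo"
  and t_hi: "\<And>j. int g + 1 \<le> j \<Longrightarrow> t j = hi"
  and t_strict: "\<And>i j. 0 \<le> i \<Longrightarrow> i < j \<Longrightarrow> j \<le> int g + 1 \<Longrightarrow> t i < t j"
begin

abbreviation B where "B \<equiv> bspline t hi"

lemma t_clamp: "t i = t (max 0 (min (int g + 1) i))"
  by (cases "i \<le> 0"; cases "int g + 1 \<le> i") (auto simp: t_lo t_hi max_def min_def)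

lemma mono_t: "i \<le> j \<Longrightarrow> t i \<le> t j"
proof -
  assume "i \<le> j"
  let ?ci = "max 0 (min (int g + 1) i)" and ?cj = "max 0 (min (int g + 1) j)"
  have "?ci \<le> ?cj" using \<open>i \<le> j\<close> by auto
  have "t ?ci \<le> t ?cj"
  proof (cases "?ci = ?cj")
    case True then show ?thesis by (simp only:)
  next
    case False
    with \<open>?ci \<le> ?cj\<close> have "?ci < ?cj" by linarith
    moreover have "0 \<le> ?ci" "?cj \<le> int g + 1" by auto
    ultimately show ?thesis using t_strict[of ?ci ?cj] by linarith
  qed
  then show ?thesis by (metis t_clamp)
qed

lemma lo_hi: "lo < hi"
  using t_strict[of 0 "int g + 1"] t_lo[of 0] t_hi[of "int g + 1"] by simp

lemma t_le_hi: "t j \<le> hi"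
  using mono_t[of j "max j (int g + 1)"] t_hi[of "max j (int g + 1)"] by simp

lemma t_ge_lo: "lo \<le> t j"
  using mono_t[of "min j 0" j] t_lo[of "min j 0"] by simp

lemma B_coinc: "t i = t (i + int m + 1) \<Longrightarrow> B m i x = 0"
proof (induction m arbitrary: i)
  case 0
  then show ?case by simp
next
  case (Suc m)
  have e: "t (i + int (Suc m) + 1) = t (i + int m + 2)" by (rule arg_cong[where f=t]) simp
  have a1: "t i \<le> t (i + int m + 1)" by (rule mono_t) simp
  have a2: "t (i + int m + 1) \<le> t (i + int m + 2)" by (rule mono_t) simp
  have a3: "t i \<le> t (i + 1)" by (rule mono_t) simp
  have a4: "t (i + 1) \<le> t (i + int m + 2)" by (rule mono_t) simp
  have c1: "t i = t (i + int m + 1)" using Suc.prems e a1 a2 by linarith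
  have c2: "t (i + 1) = t (i + 1 + int m + 1)"
  proof -
    have "t (i + 1 + int m + 1) = t (i + int m + 2)" by (rule arg_cong[where f=t]) simp
    then show ?thesis using Suc.prems e a3 a4 a1 a2 by linarith
  qed
  show ?case using Suc.IH[OF c1] Suc.IH[OF c2] by simp
qed

lemma B_supp: "B m i x \<noteq> 0 \<Longrightarrow> t i \<le> x \<and> x \<le> t (i + int m + 1)"
proof (induction m arbitrary: i)
  case 0
  then show ?case by (auto split: if_splits)
next
  case (Suc m)
  have e: "t (i + int (Suc m) + 1) = t (i + int m + 2)" by (rule arg_cong[where f=t]) simp
  have e2: "t (i + 1 + int m + 1) = t (i + int m + 2)" by (rule arg_cong[where f=t]) simp
  have a2: "t (i + int m + 1) \<le> t (i + int m + 2)" by (rule mono_t) simp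
  have a3: "t i \<le> t (i + 1)" by (rule mono_t) simp
  from Suc.prems have "B m i x \<noteq> 0 \<or> B m (i+1) x \<noteq> 0" by auto
  then show ?case
  proof
    assume "B m i x \<noteq> 0"
    from Suc.IH[OF this] show ?thesis using e a2 by auto
  next
    assume "B m (i+1) x \<noteq> 0"
    from Suc.IH[OF this] show ?thesis using e e2 a3 by auto
  qed
qed

lemma B_nonneg: "0 \<le> B m i x"
proof (induction m arbitrary: i)
  case 0
  then show ?case by simp
next
  case (Suc m)
  have a1: "t i \<le> t (i + int m + 1)" by (rule mono_t) simp
  have a4: "t (i + 1) \<le> t (i + int m + 2)" by (rule mono_t) simp
  have e2: "t (i + 1 + int m + 1) = t (i + int m + 2)" by (rule arg_cong[where f=t]) simp
  have 1: "0 \<le> (x - t i) / (t (i + int m + 1) - t i) * B m i x"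
  proof (cases "B m i x = 0")
    case False
    then have "t i \<le> x" using B_supp by blast
    then show ?thesis using a1 Suc.IH[of i] by (intro mult_nonneg_nonneg divide_nonneg_nonneg) auto
  qed simp
  have 2: "0 \<le> (t (i + int m + 2) - x) / (t (i + int m + 2) - t (i + 1)) * B m (i + 1) x"
  proof (cases "B m (i+1) x = 0")
    case False
    then have "x \<le> t (i + int m + 2)" using B_supp[of m "i+1" x] e2 by auto
    then show ?thesis using a4 Suc.IH[of "i+1"] by (intro mult_nonneg_nonneg divide_nonneg_nonneg) auto
  qed simp
  show ?case using 1 2 by simp
qed

lemma term1_nonneg: "0 \<le> (x - t i) / (t (i + int m + 1) - t i) * B m i x"
proof (cases "B m i x = 0")
  case False
  then have "t i \<le> x" using B_supp by blast
  moreover have a1: "t i \<le> t (i + int m + 1)" by (rule mono_t) simp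
  ultimately show ?thesis using B_nonneg[of m i x] by (intro mult_nonneg_nonneg divide_nonneg_nonneg) auto
qed simp

lemma term2_nonneg: "0 \<le> (t (i + int m + 2) - x) / (t (i + int m + 2) - t (i + 1)) * B m (i + 1) x"
proof (cases "B m (i+1) x = 0")
  case False
  have e2: "t (i + 1 + int m + 1) = t (i + int m + 2)" by (rule arg_cong[where f=t]) simp
  have "x \<le> t (i + int m + 2)" using B_supp[of m "i+1" x] e2 False by auto
  moreover have a4: "t (i + 1) \<le> t (i + int m + 2)" by (rule mono_t) simp
  ultimately show ?thesis using B_nonneg[of m "i+1" x] by (intro mult_nonneg_nonneg divide_nonneg_nonneg) auto
qed simp

lemma B_pos: "i \<le> j \<Longrightarrow> j \<le> i + int m \<Longrightarrow> t j < x \<Longrightarrow> x < t (j+1) \<Longrightarrow> 0 < B m i x"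
proof (induction m arbitrary: i)
  case 0
  then have "j = i" by simp
  then show ?case using 0 by simp
next
  case (Suc m)
  have 1: "0 \<le> (x - t i) / (t (i + int m + 1) - t i) * B m i x" by (rule term1_nonneg)
  have 2: "0 \<le> (t (i + int m + 2) - x) / (t (i + int m + 2) - t (i + 1)) * B m (i + 1) x"
    by (rule term2_nonneg)
  show ?case
  proof (cases "j \<le> i + int m")
    case True
    have p: "0 < B m i x" by (rule Suc.IH) (use Suc.prems True in auto)
    have "t i \<le> t j" "t (j+1) \<le> t (i + int m + 1)" using Suc.prems True by (auto intro: mono_t)
    then have "0 < (x - t i) / (t (i + int m + 1) - t i)" using Suc.prems by auto
    then show ?thesis using p 2 by (simp only: bspline.simps) (rule add_pos_nonneg[OF mult_pos_pos])
  next
    case False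
    have p: "0 < B m (i+1) x" by (rule Suc.IH) (use Suc.prems False in auto)
    have "t (i+1) \<le> t j" "t (j+1) \<le> t (i + int m + 2)" using Suc.prems False by (auto intro: mono_t)
    then have "0 < (t (i + int m + 2) - x) / (t (i + int m + 2) - t (i + 1))" using Suc.prems by auto
    then show ?thesis using p 1 by (simp only: bspline.simps) (rule add_nonneg_pos[OF _ mult_pos_pos])
  qed
qed

end

context knots begin

lemma loc: "lo \<le> x \<Longrightarrow> x \<le> hi \<Longrightarrow> \<exists>r. 0 \<le> r \<and> r \<le> int g \<and> t r \<le> x \<and> (x < t (r+1) \<or> r = int g)"
proof -
  assume x: "lo \<le> x" "x \<le> hi"
  define R where "R = {r \<in> {0..int g}. t r \<le> x}"
  have fin: "finite R" unfolding R_def by (rule finite_subset[where B="{0..int g}"]) auto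
  have "0 \<in> R" unfolding R_def using x t_lo[of 0] by simp
  then have ne: "R \<noteq> {}" by auto
  define r where "r = Max R"
  have rR: "r \<in> R" unfolding r_def using fin ne by simp
  then have r1: "0 \<le> r" "r \<le> int g" "t r \<le> x" unfolding R_def by auto
  have "x < t (r+1) \<or> r = int g"
  proof (rule ccontr)
    assume "\<not> (x < t (r+1) \<or> r = int g)"
    then have "r + 1 \<in> R" unfolding R_def using r1 by auto
    then have "r + 1 \<le> r" unfolding r_def using Max_ge[OF fin] by blast
    then show False by simp
  qed
  then show ?thesis using r1 by blast
qed

lemma B0_int: "0 \<le> r \<Longrightarrow> r \<le> int g \<Longrightarrow> t r \<le> x \<Longrightarrow> x < t (r+1) \<Longrightarrow> B 0 j x = (if j = r then 1 else 0)"
proof -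
  assume a: "0 \<le> r" "r \<le> int g" "t r \<le> x" "x < t (r+1)"
  have xhi: "x < hi" using a t_le_hi[of "r+1"] by simp
  consider "j = r" | "j < r" | "r < j" by linarith
  then show ?thesis
  proof cases
    case 1
    then show ?thesis using a t_strict[of r "r+1"] by simp
  next
    case 2
    then have "t (j+1) \<le> t r" by (intro mono_t) simp
    then show ?thesis using a 2 xhi by auto
  next
    case 3
    then have "t (r+1) \<le> t j" by (intro mono_t) simp
    then show ?thesis using a 3 by auto
  qed
qed

lemma B0_hi: "B 0 j hi = (if j = int g then 1 else 0)"
proof -
  consider "j = int g" | "j < int g" | "int g < j" by linarith
  then show ?thesis
  proof cases
    case 1
    then show ?thesis using t_strict[of "int g" "int g+1"] t_hi[of "int g + 1"] by simp
  next
    case 2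
    then have "t (j+1) \<le> t (int g)" by (intro mono_t) simp
    moreover have "t (int g) < hi" using t_strict[of "int g" "int g+1"] t_hi[of "int g + 1"] by simp
    ultimately show ?thesis using 2 by auto
  next
    case 3
    then show ?thesis using t_hi[of j] t_hi[of "j+1"] by simp
  qed
qed

lemma B_bp: "0 \<le> r \<Longrightarrow> r \<le> int g \<Longrightarrow> t r \<le> x \<Longrightarrow> x < t (r+1) \<Longrightarrow> B m i x = bp t r m i x"
proof (induction m arbitrary: i)
  case 0
  show ?case using B0_int[OF 0] by (simp del: bspline.simps)
next
  case (Suc m)
  show ?case using Suc.IH[OF Suc.prems] Suc.IH[of "i+1", OF Suc.prems] by simp
qed

lemma B_bp_hi: "B m i hi = bp t (int g) m i hi"
proof (induction m arbitrary: i)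
  case 0
  show ?case using B0_hi by (simp del: bspline.simps)
next
  case (Suc m)
  show ?case using Suc.IH[of i] Suc.IH[of "i+1"] by simp
qed

lemma bp_jump1: "0 \<le> r \<Longrightarrow> r < int g \<Longrightarrow> bp t r (Suc m) i (t (r+1)) = bp t (r+1) (Suc m) i (t (r+1))"
proof (induction m arbitrary: i)
  case 0
  have s1: "t r < t (r+1)" "t (r+1) < t (r+2)" using 0 t_strict by auto
  consider "i = r" | "i = r - 1" | "i = r + 1" | "i \<noteq> r \<and> i \<noteq> r - 1 \<and> i \<noteq> r + 1" by blast
  then show ?case
  proof cases
    case 1
    then show ?thesis using s1 by (simp add: add.commute)
  next
    case 2
    then show ?thesis by (simp add: add.commute)
  next
    case 3
    then show ?thesis by simp
  next
    case 4
    then show ?thesis by auto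
  qed
next
  case (Suc m)
  show ?case using Suc.IH[OF Suc.prems] Suc.IH[of "i+1", OF Suc.prems]
    by (simp only: bp.simps)
qed

lemma bp_jump: "0 \<le> r \<Longrightarrow> r < int g \<Longrightarrow> 0 < m \<Longrightarrow> bp t r m i (t (r+1)) = bp t (r+1) m i (t (r+1))"
  using bp_jump1 by (cases m) auto

lemma B_bp_closed: "0 \<le> r \<Longrightarrow> r \<le> int g \<Longrightarrow> t r \<le> x \<Longrightarrow> x \<le> t (r+1) \<Longrightarrow> 0 < m \<Longrightarrow> B m i x = bp t r m i x"
proof -
  assume a: "0 \<le> r" "r \<le> int g" "t r \<le> x" "x \<le> t (r+1)" "0 < m"
  show ?thesis
  proof (cases "x < t (r+1)")
    case True
    then show ?thesis using a B_bp by blast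
  next
    case False
    then have x: "x = t (r+1)" using a by simp
    show ?thesis
    proof (cases "r = int g")
      case True
      then have "x = hi" using x t_hi by simp
      then show ?thesis using True B_bp_hi by simp
    next
      case False
      then have "r < int g" using a by simp
      have "B m i x = bp t (r+1) m i x"
        by (rule B_bp) (use a \<open>r < int g\<close> x t_strict[of "r+1" "r+2"] in \<open>auto simp: add.assoc\<close>)
      also have "\<dots> = bp t r m i x" using bp_jump[OF a(1) \<open>r < int g\<close> a(5)] x by simp
      finally show ?thesis .
    qed
  qed
qed

lemma bp_cont: "continuous_on A (bp t r m i)"
proof (induction m arbitrary: i)
  case 0
  then show ?case by (simp add: continuous_on_const)
next
  case (Suc m)
  have e: "bp t r (Suc m) i = (\<lambda>x. (x - t i) * (1 / (t (i + int m + 1) - t i)) * bp t r m i x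
     + (t (i + int m + 2) - x) * (1 / (t (i + int m + 2) - t (i + 1))) * bp t r m (i + 1) x)"
    by (rule ext) simp
  show ?case unfolding e by (intro continuous_intros Suc.IH)
qed

lemma knot_cover: "{lo..hi} = (\<Union>r\<in>{0..int g}. {t r..t (r+1)})"
proof
  show "{lo..hi} \<subseteq> (\<Union>r\<in>{0..int g}. {t r..t (r+1)})"
  proof
    fix x assume "x \<in> {lo..hi}"
    then obtain r where r: "0 \<le> r" "r \<le> int g" "t r \<le> x" "x < t (r+1) \<or> r = int g"
      using loc by auto
    have "x \<le> t (r+1)" using r \<open>x \<in> {lo..hi}\<close> t_hi[of "r+1"] by auto
    then show "x \<in> (\<Union>r\<in>{0..int g}. {t r..t (r+1)})" using r by auto
  qed
  show "(\<Union>r\<in>{0..int g}. {t r..t (r+1)}) \<subseteq> {lo..hi}"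
  proof clarify
    fix x r assume "x \<in> {t r..t (r+1)}"
    then show "x \<in> {lo..hi}" using t_ge_lo[of r] t_le_hi[of "r+1"] by auto
  qed
qed

lemma B_cont: "0 < m \<Longrightarrow> continuous_on {lo..hi} (B m i)"
  unfolding knot_cover
proof (rule continuous_on_closed_Union)
  fix r assume r: "r \<in> {0..int g}" "0 < m"
  show "continuous_on {t r..t (r + 1)} (B m i)"
    using bp_cont by (rule continuous_on_eq) (use r B_bp_closed in auto)
qed auto

end

context knots begin

lemma bp_deriv: "(bp t r (Suc m) i has_real_derivative (real (Suc m) * (bp t r m i x / (t (i + int m + 1) - t i) - bp t r m (i + 1) x / (t (i + int m + 2) - t (i + 1))))) (at x)"
proof (induction m arbitrary: i)
  case 0
  define c0 :: real where "c0 = (if i = r then 1 else 0)"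
  define c1 :: real where "c1 = (if i + 1 = r then 1 else 0)"
  define d0 :: real where "d0 = 1/(t (i+1) - t i)"
  define d1 :: real where "d1 = 1/(t (i+2) - t (i+1))"
  have e: "bp t r (Suc 0) i = (\<lambda>y. (y - t i) * d0 * c0 + (t (i+2) - y) * d1 * c1)"
    by (rule ext) (simp add: c0_def c1_def d0_def d1_def)
  have "((\<lambda>y. (y - t i) * d0 * c0 + (t (i+2) - y) * d1 * c1)
     has_real_derivative (1 * d0 * c0 + (0 - 1) * d1 * c1)) (at x)"
    by (auto intro!: derivative_eq_intros)
  then show ?case unfolding e by (rule DERIV_cong) (simp add: c0_def c1_def d0_def d1_def)
next
  case (Suc m)
  define p0 where "p0 = t i"
  define p1 where "p1 = t (i+1)"
  define p2 where "p2 = t (i+2)"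
  define q0 where "q0 = t (i + int m + 1)"
  define q1 where "q1 = t (i + int m + 2)"
  define q2 where "q2 = t (i + int m + 3)"
  have eqs: "t (i + int (Suc m) + 1) = q1" "t (i + int (Suc m) + 2) = q2"
     "t (i + 1 + int m + 1) = q1" "t (i + 1 + int m + 2) = q2" "t (i + 1 + 1) = p2"
    unfolding q1_def q2_def p2_def by (rule arg_cong[where f=t]; simp)+
  have eb: "bp t r m (i + 1 + 1) x = bp t r m (i+2) x" by (simp add: add.assoc)
  have IH1: "(bp t r (Suc m) i has_real_derivative (real (Suc m) * (bp t r m i x / (q0 - p0) - bp t r m (i + 1) x / (q1 - p1)))) (at x)"
    using Suc.IH[of i] unfolding p0_def p1_def q0_def q1_def .
  have IH2: "(bp t r (Suc m) (i+1) has_real_derivative (real (Suc m) * (bp t r m (i+1) x / (q1 - p1) - bp t r m (i + 2) x / (q2 - p2)))) (at x)"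
    using Suc.IH[of "i+1"] unfolding eqs eb p1_def .
  have e: "bp t r (Suc (Suc m)) i = (\<lambda>y. (y - p0) * (1/(q1 - p0)) * bp t r (Suc m) i y + (q2 - y) * (1/(q2 - p1)) * bp t r (Suc m) (i+1) y)"
    by (rule ext) (simp only: bp.simps eqs p0_def p1_def, simp)
  have ex1: "bp t r (Suc m) i x = (x-p0)/(q0-p0) * bp t r m i x + (q1-x)/(q1-p1) * bp t r m (i+1) x"
    by (simp only: bp.simps p0_def q0_def q1_def p1_def)
  have ex2: "bp t r (Suc m) (i+1) x = (x-p1)/(q1-p1) * bp t r m (i+1) x + (q2-x)/(q2-p2) * bp t r m (i+2) x"
    by (simp only: bp.simps eqs p1_def eb)
  have mono: "p0 \<le> p1" "p1 \<le> q0" "q0 \<le> q1" "q1 \<le> q2" "p1 \<le> p2" "p2 \<le> q1"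
    unfolding p0_def p1_def p2_def q0_def q1_def q2_def by (rule mono_t; simp)+
  note alg = deriv_alg[OF mono, of x "bp t r m i x" "bp t r m (i+1) x" "bp t r m (i+2) x"]
  define d0 where "d0 = 1/(q1 - p0)"
  define d1 where "d1 = 1/(q2 - p1)"
  define D1 where "D1 = real (Suc m) * (bp t r m i x / (q0 - p0) - bp t r m (i + 1) x / (q1 - p1))"
  define D2 where "D2 = real (Suc m) * (bp t r m (i+1) x / (q1 - p1) - bp t r m (i + 2) x / (q2 - p2))"
  have e': "bp t r (Suc (Suc m)) i = (\<lambda>y. (y - p0) * d0 * bp t r (Suc m) i y + (q2 - y) * d1 * bp t r (Suc m) (i+1) y)"
    unfolding e d0_def d1_def ..
  have h1: "((\<lambda>y. (y - p0) * d0) has_real_derivative d0) (at x)" by (auto intro!: derivative_eq_intros)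
  have h2: "((\<lambda>y. (q2 - y) * d1) has_real_derivative -d1) (at x)" by (auto intro!: derivative_eq_intros)
  have "((\<lambda>y. (y - p0) * d0 * bp t r (Suc m) i y + (q2 - y) * d1 * bp t r (Suc m) (i+1) y)
     has_real_derivative (d0 * bp t r (Suc m) i x + D1 * ((x - p0) * d0)) + (-d1 * bp t r (Suc m) (i+1) x + D2 * ((q2 - x) * d1))) (at x)"
    by (intro DERIV_add DERIV_mult h1 h2 IH1[folded D1_def] IH2[folded D2_def])
  then show ?case unfolding e'
  proof (rule DERIV_cong)
    define P where "P = bp t r (Suc m) i x"
    define Q where "Q = bp t r (Suc m) (i+1) x"
    define u where "u = bp t r m i x / (q0 - p0) - bp t r m (i + 1) x / (q1 - p1)"
    define w where "w = bp t r m (i+1) x / (q1 - p1) - bp t r m (i + 2) x / (q2 - p2)"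
    have r1: "(d0 * P + D1 * ((x - p0) * d0)) + (-d1 * Q + D2 * ((q2 - x) * d1))
       = (P*d0 - Q*d1) + real (Suc m) * ((x-p0)* d0 * u + (q2-x) * d1 * w)"
      unfolding D1_def D2_def u_def[symmetric] w_def[symmetric] by (simp only: algebra_simps)
    have r2: "(x-p0)* d0 * u + (q2-x) * d1 * w = P*d0 - Q*d1"
      using alg unfolding d0_def d1_def u_def w_def P_def Q_def ex1[symmetric] ex2[symmetric] by simp
    have r3: "P*d0 - Q*d1 = P / (t (i + int (Suc m) + 1) - t i) - Q / (t (i + int (Suc m) + 2) - t (i + 1))"
      unfolding eqs p0_def[symmetric] p1_def[symmetric] d0_def d1_def by simp
    show "(d0 * bp t r (Suc m) i x + D1 * ((x - p0) * d0)) + (-d1 * bp t r (Suc m) (i+1) x + D2 * ((q2 - x) * d1))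
      = real (Suc (Suc m)) * (bp t r (Suc m) i x / (t (i + int (Suc m) + 1) - t i) - bp t r (Suc m) (i + 1) x / (t (i + int (Suc m) + 2) - t (i + 1)))"
      unfolding P_def[symmetric] Q_def[symmetric] r1 r2 r3[symmetric] by (simp add: algebra_simps)
  qed
qed

end

lemma sum_shift_int: "(\<Sum>i\<in>{a..b::int}. f (i+1)) = (\<Sum>j\<in>{a+1..b+1}. f j)"
  by (rule sum.reindex_bij_witness[where i="\<lambda>j. j-1" and j="\<lambda>i. i+1"]) auto

context knots begin

lemma B_deriv: "t r < x \<Longrightarrow> x < t (r+1) \<Longrightarrow> 0 \<le> r \<Longrightarrow> r \<le> int g \<Longrightarrow>
  (B (Suc m) i has_real_derivative (real (Suc m) * (B m i x / (t (i + int m + 1) - t i) - B m (i + 1) x / (t (i + int m + 2) - t (i + 1))))) (at x)"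
proof -
  assume a: "t r < x" "x < t (r+1)" "0 \<le> r" "r \<le> int g"
  have "(bp t r (Suc m) i has_real_derivative (real (Suc m) * (bp t r m i x / (t (i + int m + 1) - t i) - bp t r m (i + 1) x / (t (i + int m + 2) - t (i + 1))))) (at x)"
    by (rule bp_deriv)
  then have "(B (Suc m) i has_real_derivative (real (Suc m) * (bp t r m i x / (t (i + int m + 1) - t i) - bp t r m (i + 1) x / (t (i + int m + 2) - t (i + 1))))) (at x)"
  proof (rule has_field_derivative_transform_within_open)
    show "open {t r<..<t (r+1)}" by simp
    show "x \<in> {t r<..<t (r+1)}" using a by simp
    fix y assume "y \<in> {t r<..<t (r+1)}"
    then show "bp t r (Suc m) i y = B (Suc m) i y" using B_bp[of r y "Suc m" i] a by simp
  qed
  moreover have "bp t r m i x = B m i x" "bp t r m (i+1) x = B m (i+1) x"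
    using B_bp[of r x] a by auto
  ultimately show ?thesis by simp
qed

lemma B_VA: "t i < t (i + int m) \<Longrightarrow> B m i (t i) = 0"
proof (induction m arbitrary: i)
  case 0
  then show ?case by simp
next
  case (Suc m)
  have "B m (i+1) (t i) = 0"
  proof (cases "t i < t (i+1)")
    case True
    then show ?thesis using B_supp[of m "i+1" "t i"] by auto
  next
    case False
    then have e: "t (i+1) = t i" using mono_t[of i "i+1"] by simp
    have "t (i + int (Suc m)) = t (i + 1 + int m)" by (rule arg_cong[where f=t]) simp
    then have "t (i+1) < t (i + 1 + int m)" using Suc.prems e by simp
    from Suc.IH[OF this] e show ?thesis by simp
  qed
  then show ?case by simp
qed

lemma B_VB: "t (i+1) < hi \<Longrightarrow> hi \<le> t (i + int m + 1) \<Longrightarrow> B m i hi = 0"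
proof (induction m arbitrary: i)
  case 0
  then show ?case by simp
next
  case (Suc m)
  have "t (i + int (Suc m) + 1) = t (i + int m + 2)" by (rule arg_cong[where f=t]) simp
  then have e: "t (i + int m + 2) = hi" using Suc.prems t_le_hi[of "i + int m + 2"] by simp
  have "B m i hi = 0"
  proof (cases "hi \<le> t (i + int m + 1)")
    case True
    then show ?thesis using Suc.IH Suc.prems by blast
  next
    case False
    then show ?thesis using B_supp[of m i hi] by auto
  qed
  then show ?case using e by simp
qed

lemma B_lo_zero: "- int m \<le> i \<Longrightarrow> B (Suc m) i lo = 0"
proof (cases "t i = lo")
  case True
  assume i: "- int m \<le> i"
  have "t 1 \<le> t (i + int (Suc m))" by (rule mono_t) (use i in simp)
  moreover have "lo < t 1" using t_strict[of 0 1] t_lo[of 0] by simp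
  ultimately have "t i < t (i + int (Suc m))" using True by simp
  then show ?thesis using B_VA True by metis
next
  case False
  then have "lo < t i" using t_ge_lo[of i] by simp
  then show ?thesis using B_supp[of "Suc m" i lo] by auto
qed

lemma B_hi_zero: "i \<le> int g - 1 \<Longrightarrow> B (Suc m) i hi = 0"
proof -
  assume i: "i \<le> int g - 1"
  have "t (i+1) \<le> t (int g)" by (rule mono_t) (use i in simp)
  moreover have "t (int g) < hi" using t_strict[of "int g" "int g + 1"] t_hi[of "int g + 1"] by simp
  ultimately have lt: "t (i+1) < hi" by simp
  show ?thesis
  proof (cases "hi \<le> t (i + int (Suc m) + 1)")
    case True
    then show ?thesis using B_VB lt by blast
  next
    case False
    then show ?thesis using B_supp[of "Suc m" i hi] by auto
  qed
qed

lemma B_ftc: "B (Suc m) i lo = 0 \<Longrightarrow> B (Suc m) i hi = 0 \<Longrightarrow>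
  ((\<lambda>x. real (Suc m) * (B m i x / (t (i + int m + 1) - t i) - B m (i + 1) x / (t (i + int m + 2) - t (i + 1)))) has_integral 0) {lo..hi}"
proof -
  assume z: "B (Suc m) i lo = 0" "B (Suc m) i hi = 0"
  have "((\<lambda>x. real (Suc m) * (B m i x / (t (i + int m + 1) - t i) - B m (i + 1) x / (t (i + int m + 2) - t (i + 1)))) has_integral (B (Suc m) i hi - B (Suc m) i lo)) {lo..hi}"
  proof (rule fundamental_theorem_of_calculus_interior_strong[where S="t ` {0..int g + 1}"])
    show "finite (t ` {0..int g + 1})" by simp
    show "lo \<le> hi" using lo_hi by simp
    show "continuous_on {lo..hi} (B (Suc m) i)" by (rule B_cont) simp
    fix x assume x: "x \<in> {lo<..<hi} - t ` {0..int g + 1}"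
    then obtain r where r: "0 \<le> r" "r \<le> int g" "t r \<le> x" "x < t (r+1) \<or> r = int g"
      using loc[of x] by auto
    have r1: "t r < x" using r x by (cases "t r = x") auto
    have r2: "x < t (r+1)" using r x t_hi[of "r+1"] by auto
    show "(B (Suc m) i has_vector_derivative (real (Suc m) * (B m i x / (t (i + int m + 1) - t i) - B m (i + 1) x / (t (i + int m + 2) - t (i + 1))))) (at x)"
      using B_deriv[OF r1 r2 r(1,2)] by (simp add: has_real_derivative_iff_has_vector_derivative)
  qed
  then show ?thesis using z by simp
qed

lemma B_int_zero: "- int m \<le> i \<Longrightarrow> i \<le> int g - 1 \<Longrightarrow>
  ((\<lambda>x. real (Suc m) * (B m i x / (t (i + int m + 1) - t i) - B m (i + 1) x / (t (i + int m + 2) - t (i + 1)))) has_integral 0) {lo..hi}"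
  by (rule B_ftc[OF B_lo_zero B_hi_zero])

lemma B_PU: "m \<le> K \<Longrightarrow> lo \<le> x \<Longrightarrow> x \<le> hi \<Longrightarrow> (\<Sum>i\<in>{- int K..int g}. B m i x) = 1"
proof (induction m)
  case 0
  then obtain r where r: "0 \<le> r" "r \<le> int g" "t r \<le> x" "x < t (r+1) \<or> r = int g"
    using loc[of x] by auto
  have "B 0 j x = (if j = r then 1 else 0)" for j
  proof (cases "x < t (r+1)")
    case True
    then show ?thesis using B0_int r by blast
  next
    case False
    then have "r = int g" "x = hi" using r 0 t_hi[of "r+1"] by auto
    then show ?thesis using B0_hi by simp
  qed
  then have "(\<Sum>i\<in>{- int K..int g}. B 0 i x) = (\<Sum>i\<in>{- int K..int g}. if i = r then 1 else 0)"
    by (intro sum.cong) (auto simp del: bspline.simps)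
  also have "\<dots> = 1" using r by simp
  finally show ?case .
next
  case (Suc m)
  let ?I = "{- int K..int g}"
  define w where "w j = (x - t j) / (t (j + int m + 1) - t j)" for j
  define v where "v j = (t (j + int m + 1) - x) / (t (j + int m + 1) - t j)" for j
  have vi: "(t (i + int m + 2) - x) / (t (i + int m + 2) - t (i + 1)) = v (i+1)" for i
    unfolding v_def by (simp add: add.assoc add.commute add.left_commute)
  have "(\<Sum>i\<in>?I. B (Suc m) i x) = (\<Sum>i\<in>?I. w i * B m i x + v (i+1) * B m (i+1) x)"
    by (intro sum.cong refl) (simp add: w_def vi[symmetric])
  also have "\<dots> = (\<Sum>i\<in>?I. w i * B m i x) + (\<Sum>i\<in>?I. v (i+1) * B m (i+1) x)"
    by (rule sum.distrib)
  also have "(\<Sum>i\<in>?I. v (i+1) * B m (i+1) x) = (\<Sum>j\<in>{- int K + 1..int g + 1}. v j * B m j x)"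
    by (rule sum_shift_int)
  also have "\<dots> = (\<Sum>j\<in>?I. v j * B m j x)"
  proof -
    have z1: "B m (- int K) x = 0"
      by (rule B_coinc) (use Suc.prems t_lo in simp)
    have z2: "B m (int g + 1) x = 0"
      by (rule B_coinc) (simp add: t_hi)
    have A: "{- int K..int g + 1} = insert (- int K) {- int K + 1..int g + 1}" by auto
    have Bs: "{- int K..int g + 1} = insert (int g + 1) ?I" by auto
    have "(\<Sum>j\<in>{- int K + 1..int g + 1}. v j * B m j x) = (\<Sum>j\<in>{- int K..int g + 1}. v j * B m j x)"
      unfolding A using z1 by simp
    also have "\<dots> = (\<Sum>j\<in>?I. v j * B m j x)"
      unfolding Bs using z2 by simp
    finally show ?thesis .
  qed
  also have "(\<Sum>i\<in>?I. w i * B m i x) + (\<Sum>j\<in>?I. v j * B m j x) = (\<Sum>j\<in>?I. B m j x)"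
    unfolding sum.distrib[symmetric]
  proof (rule sum.cong)
    fix j
    show "w j * B m j x + v j * B m j x = B m j x"
    proof (cases "t (j + int m + 1) = t j")
      case True
      then show ?thesis using B_coinc[of j m x] by simp
    next
      case False
      have "w j + v j = ((x - t j) + (t (j + int m + 1) - x)) / (t (j + int m + 1) - t j)"
        unfolding w_def v_def by (rule add_divide_distrib[symmetric])
      also have "\<dots> = 1" using False by simp
      finally have "w j + v j = 1" .
      then show ?thesis by (metis distrib_right mult_1)
    qed
  qed simp
  also have "\<dots> = 1" using Suc by simp
  finally show ?case .
qed

lemma B_le1: "- int K \<le> i \<Longrightarrow> i \<le> int g \<Longrightarrow> lo \<le> x \<Longrightarrow> x \<le> hi \<Longrightarrow> B K i x \<le> 1"
proof -
  assume a: "- int K \<le> i" "i \<le> int g" "lo \<le> x" "x \<le> hi"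
  have "B K i x \<le> (\<Sum>j\<in>{- int K..int g}. B K j x)"
    by (rule member_le_sum) (use a B_nonneg in auto)
  then show ?thesis using B_PU[of K K x] a by simp
qed

end

lemma poly_indep:
  fixes Q :: "nat \<Rightarrow> real \<Rightarrow> real" and c :: "nat \<Rightarrow> real"
  assumes cont: "\<And>r. r < n \<Longrightarrow> continuous_on UNIV (Q r)"
    and nz: "\<And>r. r < n \<Longrightarrow> Q r a \<noteq> 0" and eps: "0 < \<epsilon>"
    and z: "\<And>x. a < x \<Longrightarrow> x < a + \<epsilon> \<Longrightarrow> (\<Sum>r<n. c r * (x - a)^r * Q r x) = 0"
  shows "\<forall>r<n. c r = 0"
proof (rule ccontr)
  assume "\<not> (\<forall>r<n. c r = 0)"
  then have ex: "\<exists>r. r < n \<and> c r \<noteq> 0" by auto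
  define s where "s = (LEAST r. r < n \<and> c r \<noteq> 0)"
  have s: "s < n" "c s \<noteq> 0" using LeastI_ex[OF ex] unfolding s_def by auto
  have below: "c r = 0" if "r < s" for r
    using not_less_Least[of r "\<lambda>r. r < n \<and> c r \<noteq> 0"] that s unfolding s_def by auto
  define F where "F x = (\<Sum>r\<in>{s..<n}. c r * (x - a)^(r - s) * Q r x)" for x
  have split: "(\<Sum>r<n. c r * (x - a)^r * Q r x) = (x - a)^s * F x" for x
  proof -
    have "(\<Sum>r<n. c r * (x - a)^r * Q r x) = (\<Sum>r\<in>{..<s}. c r * (x - a)^r * Q r x) + (\<Sum>r\<in>{s..<n}. c r * (x - a)^r * Q r x)"
      using sum.atLeastLessThan_concat[of 0 s n "\<lambda>r. c r * (x - a)^r * Q r x"] s by (simp add: atLeast0LessThan)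
    also have "(\<Sum>r\<in>{..<s}. c r * (x - a)^r * Q r x) = 0" using below by simp
    also have "(\<Sum>r\<in>{s..<n}. c r * (x - a)^r * Q r x) = (\<Sum>r\<in>{s..<n}. (x-a)^s * (c r * (x - a)^(r - s) * Q r x))"
    proof (rule sum.cong)
      fix r assume "r \<in> {s..<n}"
      then have "(x - a)^r = (x-a)^s * (x-a)^(r-s)" by (simp add: power_add[symmetric])
      then show "c r * (x - a)^r * Q r x = (x-a)^s * (c r * (x - a)^(r - s) * Q r x)" by simp
    qed simp
    also have "\<dots> = (x - a)^s * F x" unfolding F_def by (simp add: sum_distrib_left)
    finally show ?thesis by simp
  qed
  have Fa: "F a = c s * Q s a"
  proof -
    have "F a = (\<Sum>r\<in>{s..<n}. if r = s then c s * Q s a else 0)"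
      unfolding F_def by (intro sum.cong) auto
    also have "\<dots> = c s * Q s a" using s by simp
    finally show ?thesis .
  qed
  have "continuous_on UNIV F" unfolding F_def
    by (intro continuous_intros) (use cont in auto)
  then have "continuous (at a) F" by (simp add: continuous_on_eq_continuous_at)
  moreover have "F a \<noteq> 0" using Fa s nz by simp
  ultimately obtain e where e: "e > 0" "\<And>y. dist a y < e \<Longrightarrow> F y \<noteq> 0"
    using continuous_at_avoid by blast
  define y where "y = a + min e \<epsilon> / 2"
  have y: "a < y" "y < a + \<epsilon>" "dist a y < e" using e eps unfolding y_def dist_real_def by auto
  have "(y - a)^s * F y \<noteq> 0" using y e by simp
  with z[OF y(1,2)] split show False by simp
qed

context knots begin

lemma bp_zero_above: "r < i \<Longrightarrow> bp t r m i x = 0"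
  by (induction m arbitrary: i) auto

lemma bp_fact: "- int m \<le> i \<Longrightarrow> i \<le> 0 \<Longrightarrow>
  \<exists>q. continuous_on UNIV q \<and> 0 < q lo \<and> (\<forall>x. bp t 0 m i x = (x - lo) ^ nat (i + int m) * q x)"
proof (induction m arbitrary: i)
  case 0
  then have "i = 0" by simp
  then show ?case by (intro exI[of _ "\<lambda>_. 1"]) simp
next
  case (Suc m)
  have t1: "lo < t 1" using t_strict[of 0 1] t_lo[of 0] by simp
  consider "i = - int m - 1" | "- int m \<le> i \<and> i \<le> -1" | "i = 0" using Suc.prems by linarith
  then show ?case
  proof cases
    case 1
    obtain q1 where q1: "continuous_on UNIV q1" "0 < q1 lo" "\<forall>x. bp t 0 m (i+1) x = (x - lo) ^ nat (i + 1 + int m) * q1 x"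
      using Suc.IH[of "i+1"] 1 by auto
    have e1: "t i = lo" "t (i + int m + 1) = lo" "t (i + 1) = lo" using 1 t_lo by auto
    have e2: "t (i + int m + 2) = t 1" by (rule arg_cong[where f=t]) (use 1 in simp)
    have n: "nat (i + 1 + int m) = 0" "nat (i + int (Suc m)) = 0" using 1 by auto
    show ?thesis
    proof (intro exI[of _ "\<lambda>x. (t 1 - x) / (t 1 - lo) * q1 x"] conjI allI)
      show "continuous_on UNIV (\<lambda>x. (t 1 - x) / (t 1 - lo) * q1 x)"
        using t1 by (intro continuous_intros q1(1)) simp
      show "0 < (t 1 - lo) / (t 1 - lo) * q1 lo" using t1 q1 by simp
      fix x
      show "bp t 0 (Suc m) i x = (x - lo) ^ nat (i + int (Suc m)) * ((t 1 - x) / (t 1 - lo) * q1 x)"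
        using q1(3) e1 e2 n by simp
    qed
  next
    case 2
    obtain q0 where q0: "continuous_on UNIV q0" "0 < q0 lo" "\<forall>x. bp t 0 m i x = (x - lo) ^ nat (i + int m) * q0 x"
      using Suc.IH[of i] 2 by auto
    obtain q1 where q1: "continuous_on UNIV q1" "0 < q1 lo" "\<forall>x. bp t 0 m (i+1) x = (x - lo) ^ nat (i + 1 + int m) * q1 x"
      using Suc.IH[of "i+1"] 2 by auto
    define D0 where "D0 = t (i + int m + 1) - lo"
    define D1 where "D1 = t (i + int m + 2) - lo"
    have e1: "t i = lo" "t (i + 1) = lo" using 2 t_lo by auto
    have "t 1 \<le> t (i + int m + 1)" "t 1 \<le> t (i + int m + 2)" using 2 by (auto intro: mono_t)
    then have D: "0 < D0" "0 < D1" using t1 unfolding D0_def D1_def by auto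
    define n0 where "n0 = nat (i + int m)"
    have n: "nat (i + 1 + int m) = Suc n0" "nat (i + int (Suc m)) = Suc n0" using 2 unfolding n0_def by auto
    show ?thesis
    proof (intro exI[of _ "\<lambda>x. q0 x / D0 + (t (i + int m + 2) - x) / D1 * q1 x"] conjI allI)
      show "continuous_on UNIV (\<lambda>x. q0 x / D0 + (t (i + int m + 2) - x) / D1 * q1 x)"
        using D by (intro continuous_intros q0(1) q1(1)) auto
      show "0 < q0 lo / D0 + (t (i + int m + 2) - lo) / D1 * q1 lo"
        using D q0(2) q1(2) unfolding D1_def by (simp add: add_pos_pos)
      fix x
      have "bp t 0 (Suc m) i x = (x - lo) / D0 * ((x - lo) ^ n0 * q0 x) + (t (i + int m + 2) - x) / D1 * ((x - lo) ^ Suc n0 * q1 x)"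
        using q0(3) q1(3) e1 n unfolding D0_def D1_def n0_def by simp
      also have "\<dots> = (x - lo) ^ Suc n0 * (q0 x / D0 + (t (i + int m + 2) - x) / D1 * q1 x)"
        by (simp add: divide_inverse algebra_simps power_Suc)
      finally show "bp t 0 (Suc m) i x = (x - lo) ^ nat (i + int (Suc m)) * (q0 x / D0 + (t (i + int m + 2) - x) / D1 * q1 x)"
        using n by simp
    qed
  next
    case 3
    obtain q0 where q0: "continuous_on UNIV q0" "0 < q0 lo" "\<forall>x. bp t 0 m 0 x = (x - lo) ^ nat (int m) * q0 x"
      using Suc.IH[of 0] by auto
    define D0 where "D0 = t (int m + 1) - lo"
    have "t 1 \<le> t (int m + 1)" by (auto intro: mono_t)
    then have D: "0 < D0" using t1 unfolding D0_def by auto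
    show ?thesis
    proof (intro exI[of _ "\<lambda>x. q0 x / D0"] conjI allI)
      show "continuous_on UNIV (\<lambda>x. q0 x / D0)"
        using D by (intro continuous_intros q0(1)) auto
      show "0 < q0 lo / D0" using D q0(2) by simp
      fix x
      have "bp t 0 (Suc m) 0 x = (x - lo) / D0 * ((x - lo) ^ m * q0 x)"
        using q0(3) bp_zero_above[of 0 1 m x] t_lo[of 0] unfolding D0_def by simp
      also have "\<dots> = (x - lo) ^ Suc m * (q0 x / D0)"
        by (simp add: divide_inverse algebra_simps power_Suc)
      finally have fin: "bp t 0 (Suc m) 0 x = (x - lo) ^ Suc m * (q0 x / D0)" .
      have nn: "nat (i + int (Suc m)) = Suc m" using 3 by simp
      show "bp t 0 (Suc m) i x = (x - lo) ^ nat (i + int (Suc m)) * (q0 x / D0)"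
        by (subst nn, unfold 3, rule fin)
    qed
  qed
qed

end

context knots begin

lemma B_indep:
  assumes z: "\<And>x. lo \<le> x \<Longrightarrow> x \<le> hi \<Longrightarrow> (\<Sum>i\<in>{- int K..int g}. c i * B K i x) = 0"
  shows "\<forall>i\<in>{- int K..int g}. c i = 0"
proof -
  have t1: "lo < t 1" using t_strict[of 0 1] t_lo[of 0] by simp
  have "\<forall>i\<in>{- int K..0}. \<exists>q. continuous_on UNIV q \<and> 0 < q lo \<and> (\<forall>x. bp t 0 K i x = (x - lo) ^ nat (i + int K) * q x)"
    using bp_fact by auto
  then obtain Q where Q: "\<forall>i\<in>{- int K..0}. continuous_on UNIV (Q i) \<and> 0 < Q i lo \<and> (\<forall>x. bp t 0 K i x = (x - lo) ^ nat (i + int K) * Q i x)"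
    by (metis bchoice)
  define c' where "c' r = c (int r - int K)" for r
  define Q' where "Q' r = Q (int r - int K)" for r
  have "\<forall>r<K+1. c' r = 0"
  proof (rule poly_indep[where Q=Q' and a=lo and \<epsilon>="t 1 - lo"])
    fix r assume r: "r < K + 1"
    then have "int r - int K \<in> {- int K..0}" by auto
    with Q have "continuous_on UNIV (Q (int r - int K)) \<and> 0 < Q (int r - int K) lo" by blast
    then show "continuous_on UNIV (Q' r)" "Q' r lo \<noteq> 0" unfolding Q'_def by auto
  next
    show "0 < t 1 - lo" using t1 by simp
  next
    fix x assume x: "lo < x" "x < lo + (t 1 - lo)"
    have "(\<Sum>r<K+1. c' r * (x - lo)^r * Q' r x) = (\<Sum>i\<in>{- int K..0}. c i * bp t 0 K i x)"
    proof (rule sum.reindex_bij_witness[where i="\<lambda>i. nat (i + int K)" and j="\<lambda>r. int r - int K"])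
      fix r assume r: "r \<in> {..<K+1}"
      then have i: "int r - int K \<in> {- int K..0}" by auto
      have "nat (int r - int K + int K) = r" by simp
      then show "c (int r - int K) * bp t 0 K (int r - int K) x = c' r * (x - lo) ^ r * Q' r x"
        using Q i unfolding c'_def Q'_def by auto
    qed auto
    also have "\<dots> = (\<Sum>i\<in>{- int K..int g}. c i * bp t 0 K i x)"
    proof (rule sum.mono_neutral_left)
      show "\<forall>i\<in>{- int K..int g} - {- int K..0}. c i * bp t 0 K i x = 0"
        using bp_zero_above by auto
    qed auto
    also have "\<dots> = (\<Sum>i\<in>{- int K..int g}. c i * B K i x)"
    proof (rule sum.cong)
      fix i
      have "B K i x = bp t 0 K i x" by (rule B_bp) (use x t_lo[of 0] in auto)
      then show "c i * bp t 0 K i x = c i * B K i x" by simp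
    qed simp
    also have "\<dots> = 0" using z x t_le_hi[of 1] by simp
    finally show "(\<Sum>r<K+1. c' r * (x - lo)^r * Q' r x) = 0" .
  qed
  then have A: "c i = 0" if "i \<in> {- int K..0}" for i
  proof -
    have r: "nat (i + int K) < K + 1" "int (nat (i + int K)) - int K = i" using that by auto
    from \<open>\<forall>r<K+1. c' r = 0\<close> r(1) have "c' (nat (i + int K)) = 0" by blast
    then show ?thesis unfolding c'_def r(2) .
  qed
  show ?thesis
  proof (rule ccontr)
    assume "\<not> (\<forall>i\<in>{- int K..int g}. c i = 0)"
    define S where "S = {i\<in>{- int K..int g}. c i \<noteq> 0}"
    have finS: "finite S" unfolding S_def by (rule finite_subset[where B="{- int K..int g}"]) auto
    have neS: "S \<noteq> {}" unfolding S_def using \<open>\<not> _\<close> by auto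
    define r where "r = Min S"
    have rS: "r \<in> S" unfolding r_def using finS neS by simp
    have rmin: "c j = 0" if "j \<in> {- int K..int g}" "j < r" for j
    proof (rule ccontr)
      assume "c j \<noteq> 0"
      then have "j \<in> S" using that unfolding S_def by simp
      then have "r \<le> j" unfolding r_def using finS by simp
      then show False using that by simp
    qed
    have r0: "- int K \<le> r" "r \<le> int g" "c r \<noteq> 0" using rS unfolding S_def by auto
    have "\<not> r \<le> 0" using A[of r] r0 by auto
    then have r1: "1 \<le> r" "r \<le> int g" "c r \<noteq> 0" using r0 by auto
    have tr: "t r < t (r+1)" using t_strict[of r "r+1"] r1 by simp
    define x where "x = (t r + t (r+1)) / 2"
    have x: "t r < x" "x < t (r+1)" using tr unfolding x_def by auto
    have xb: "lo \<le> x" "x \<le> hi" using x t_ge_lo[of r] t_le_hi[of "r+1"] by auto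
    have "(\<Sum>i\<in>{- int K..int g}. c i * B K i x) = (\<Sum>i\<in>{- int K..int g}. if i = r then c r * B K r x else 0)"
    proof (rule sum.cong)
      fix i assume i: "i \<in> {- int K..int g}"
      show "c i * B K i x = (if i = r then c r * B K r x else 0)"
      proof (cases "i < r")
        case True
        then show ?thesis using rmin i by simp
      next
        case False
        show ?thesis
        proof (cases "i = r")
          case False
          with \<open>\<not> i < r\<close> have "r + 1 \<le> i" by simp
          then have "t (r+1) \<le> t i" by (rule mono_t)
          then have "B K i x = 0" using B_supp[of K i x] x by auto
          then show ?thesis using False by simp
        qed simp
      qed
    qed simp
    also have "\<dots> = c r * B K r x" using rS unfolding S_def by simp
    finally have "c r * B K r x = 0" using z xb by simp
    moreover have "0 < B K r x" by (rule B_pos[of r r]) (use x in auto)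
    ultimately show False using r1 by simp
  qed
qed

end

lemma prod_integral:
  fixes f g :: "real \<Rightarrow> real"
  assumes f: "f \<in> borel_measurable borel" and g: "g \<in> borel_measurable borel"
    and fb: "\<And>x. x \<in> {a..b} \<Longrightarrow> \<bar>f x\<bar> \<le> Mf" and gb: "\<And>y. y \<in> {c..d} \<Longrightarrow> \<bar>g y\<bar> \<le> Mg"
  shows "((\<lambda>p. f (fst p) * g (snd p)) has_integral (integral {a..b} f * integral {c..d} g)) ({a..b} \<times> {c..d})"
proof -
  define F where "F x = indicator {a..b} x * f x" for x
  define G where "G y = indicator {c..d} y * g y" for y
  have Fm[measurable]: "F \<in> borel_measurable lborel" unfolding F_def using f by simp
  have Gm[measurable]: "G \<in> borel_measurable lborel" unfolding G_def using g by simp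
  have FI: "integrable lborel F"
  proof (rule Bochner_Integration.integrable_bound)
    show "integrable lborel (\<lambda>x. \<bar>Mf\<bar> * indicator {a..b} x :: real)"
      by (intro integrable_mult_right integrable_real_indicator) (auto simp: emeasure_lborel_Icc_eq)
    show "F \<in> borel_measurable lborel" by (rule Fm)
    show "AE x in lborel. norm (F x) \<le> norm (\<bar>Mf\<bar> * indicator {a..b} x :: real)"
      using fb by (auto simp: F_def indicator_def intro: order_trans[OF _ abs_ge_self])
  qed
  have GI: "integrable lborel G"
  proof (rule Bochner_Integration.integrable_bound)
    show "integrable lborel (\<lambda>x. \<bar>Mg\<bar> * indicator {c..d} x :: real)"
      by (intro integrable_mult_right integrable_real_indicator) (auto simp: emeasure_lborel_Icc_eq)
    show "G \<in> borel_measurable lborel" by (rule Gm)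
    show "AE x in lborel. norm (G x) \<le> norm (\<bar>Mg\<bar> * indicator {c..d} x :: real)"
      using gb by (auto simp: G_def indicator_def intro: order_trans[OF _ abs_ge_self])
  qed
  have Fint: "integral {a..b} f = (\<integral>x. F x \<partial>lborel)"
  proof -
    have "(F has_integral (\<integral>x. F x \<partial>lborel)) UNIV" by (rule has_integral_integral_lborel[OF FI])
    moreover have "F = (\<lambda>x. if x \<in> {a..b} then f x else 0)" unfolding F_def by (auto simp: indicator_def)
    ultimately have "(f has_integral (\<integral>x. F x \<partial>lborel)) {a..b}"
      using has_integral_restrict_UNIV[of "{a..b}" f] by simp
    then show ?thesis by (rule integral_unique)
  qed
  have Gint: "integral {c..d} g = (\<integral>x. G x \<partial>lborel)"
  proof -
    have "(G has_integral (\<integral>x. G x \<partial>lborel)) UNIV" by (rule has_integral_integral_lborel[OF GI])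
    moreover have "G = (\<lambda>x. if x \<in> {c..d} then g x else 0)" unfolding G_def by (auto simp: indicator_def)
    ultimately have "(g has_integral (\<integral>x. G x \<partial>lborel)) {c..d}"
      using has_integral_restrict_UNIV[of "{c..d}" g] by simp
    then show ?thesis by (rule integral_unique)
  qed
  define H where "H p = F (fst p) * G (snd p)" for p :: "real \<times> real"
  have Hm: "H \<in> borel_measurable (lborel \<Otimes>\<^sub>M lborel)" unfolding H_def by measurable
  have HI: "integrable (lborel \<Otimes>\<^sub>M lborel) H"
  proof (rule lborel_pair.Fubini_integrable[OF Hm])
    have "(\<lambda>x. \<integral>y. norm (H (x, y)) \<partial>lborel) = (\<lambda>x. \<bar>F x\<bar> * (\<integral>y. \<bar>G y\<bar> \<partial>lborel))"
      unfolding H_def by (simp add: abs_mult)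
    then show "integrable lborel (\<lambda>x. \<integral>y. norm (H (x, y)) \<partial>lborel)"
      using FI by simp
    show "AE x in lborel. integrable lborel (\<lambda>y. H (x, y))"
      unfolding H_def using GI by simp
  qed
  have HV: "integral\<^sup>L (lborel \<Otimes>\<^sub>M lborel) H = (\<integral>x. F x \<partial>lborel) * (\<integral>x. G x \<partial>lborel)"
  proof -
    have "integral\<^sup>L (lborel \<Otimes>\<^sub>M lborel) H = (\<integral>x. (\<integral>y. H (x, y) \<partial>lborel) \<partial>lborel)"
      by (rule lborel_pair.integral_fst'[OF HI, symmetric])
    also have "\<dots> = (\<integral>x. F x * (\<integral>y. G y \<partial>lborel) \<partial>lborel)"
      unfolding H_def by simp
    also have "\<dots> = (\<integral>x. F x \<partial>lborel) * (\<integral>x. G x \<partial>lborel)" by simp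
    finally show ?thesis .
  qed
  have HI': "integrable lborel H" using HI by (simp add: lborel_prod)
  have HV': "(\<integral>p. H p \<partial>lborel) = (\<integral>x. F x \<partial>lborel) * (\<integral>x. G x \<partial>lborel)"
    using HV by (simp add: lborel_prod)
  have "(H has_integral (\<integral>p. H p \<partial>lborel)) UNIV" by (rule has_integral_integral_lborel[OF HI'])
  moreover have "H = (\<lambda>p. if p \<in> {a..b} \<times> {c..d} then f (fst p) * g (snd p) else 0)"
    unfolding H_def F_def G_def by (auto simp: indicator_def fun_eq_iff)
  ultimately have "((\<lambda>p. f (fst p) * g (snd p)) has_integral (\<integral>p. H p \<partial>lborel)) ({a..b} \<times> {c..d})"
    using has_integral_restrict_UNIV[of "{a..b} \<times> {c..d}" "\<lambda>p. f (fst p) * g (snd p)"] by simp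
  then show ?thesis unfolding HV' Fint Gint .
qed

lemma bspline_meas: "bspline t hi m i \<in> borel_measurable borel"
proof (induction m arbitrary: i)
  case 0
  show ?case by simp measurable
next
  case (Suc m)
  have e: "bspline t hi (Suc m) i = (\<lambda>x. (x - t i) * (1 / (t (i + int m + 1) - t i)) * bspline t hi m i x
     + (t (i + int m + 2) - x) * (1 / (t (i + int m + 2) - t (i + 1))) * bspline t hi m (i + 1) x)"
    by (rule ext) simp
  have c1: "continuous_on UNIV (\<lambda>x. (x - t i) * (1 / (t (i + int m + 1) - t i)))"
    by (intro continuous_intros)
  have c2: "continuous_on UNIV (\<lambda>x. (t (i + int m + 2) - x) * (1 / (t (i + int m + 2) - t (i + 1))))"
    by (intro continuous_intros)
  show ?case unfolding e
    by (rule borel_measurable_add[OF borel_measurable_times[OF borel_measurable_continuous_onI[OF c1] Suc.IH]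
                                     borel_measurable_times[OF borel_measurable_continuous_onI[OF c2] Suc.IH]])
qed

lemma zbspline_meas: "zbspline t hi k i \<in> borel_measurable borel"
  unfolding zbspline_def
  by (intro borel_measurable_times borel_measurable_diff borel_measurable_divide bspline_meas borel_measurable_const)

context knots begin

lemma Delta_pos: "- int K \<le> p \<Longrightarrow> p \<le> int g \<Longrightarrow> 0 < t (p + int K + 1) - t p"
proof -
  assume p: "- int K \<le> p" "p \<le> int g"
  define q where "q = max p 0"
  have "t p \<le> t q" unfolding q_def by (rule mono_t) simp
  moreover have "t q < t (q + 1)" using t_strict[of q "q+1"] p unfolding q_def by simp
  moreover have "t (q + 1) \<le> t (p + int K + 1)" unfolding q_def by (rule mono_t) (use p in simp)
  ultimately show ?thesis by simp
qed

lemma Z_int: "- int K \<le> i \<Longrightarrow> i \<le> int g - 1 \<Longrightarrow> (zbspline t hi K i has_integral 0) {lo..hi}"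
proof -
  assume i: "- int K \<le> i" "i \<le> int g - 1"
  have e: "zbspline t hi K i = (\<lambda>x. real (Suc K) * (B K i x / (t (i + int K + 1) - t i) - B K (i + 1) x / (t (i + int K + 2) - t (i + 1))))"
    by (rule ext) (simp add: zbspline_def)
  show ?thesis unfolding e by (rule B_int_zero[OF i])
qed

lemma Z_bound: "- int K \<le> i \<Longrightarrow> i \<le> int g - 1 \<Longrightarrow> x \<in> {lo..hi} \<Longrightarrow>
  \<bar>zbspline t hi K i x\<bar> \<le> (real K + 1) * (1 / (t (i + int K + 1) - t i) + 1 / (t (i + int K + 2) - t (i + 1)))"
proof -
  assume i: "- int K \<le> i" "i \<le> int g - 1" and x: "x \<in> {lo..hi}"
  define D0 where "D0 = t (i + int K + 1) - t i"
  define D1 where "D1 = t (i + int K + 2) - t (i + 1)"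
  have D0: "0 < D0" unfolding D0_def by (rule Delta_pos) (use i in auto)
  have "0 < t (i + 1 + int K + 1) - t (i + 1)" by (rule Delta_pos) (use i in auto)
  moreover have "t (i + 1 + int K + 1) = t (i + int K + 2)" by (rule arg_cong[where f=t]) simp
  ultimately have D1: "0 < D1" unfolding D1_def by simp
  have b0: "0 \<le> B K i x" "B K i x \<le> 1" using B_nonneg B_le1[of K i x] i x by auto
  have b1: "0 \<le> B K (i+1) x" "B K (i+1) x \<le> 1" using B_nonneg B_le1[of K "i+1" x] i x by auto
  have "\<bar>B K i x / D0 - B K (i+1) x / D1\<bar> \<le> \<bar>B K i x / D0\<bar> + \<bar>B K (i+1) x / D1\<bar>" by (rule abs_triangle_ineq4)
  also have "\<bar>B K i x / D0\<bar> \<le> 1 / D0" using b0 D0 by (simp add: divide_right_mono)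
  also have "\<bar>B K (i+1) x / D1\<bar> \<le> 1 / D1" using b1 D1 by (simp add: divide_right_mono)
  finally have "\<bar>B K i x / D0 - B K (i+1) x / D1\<bar> \<le> 1 / D0 + 1 / D1" by simp
  then have "(real K + 1) * \<bar>B K i x / D0 - B K (i+1) x / D1\<bar> \<le> (real K + 1) * (1 / D0 + 1 / D1)"
    by (intro mult_left_mono) auto
  then show ?thesis unfolding zbspline_def D0_def D1_def by (simp add: abs_mult)
qed

end

definition phi :: "(int \<Rightarrow> real) \<Rightarrow> real \<Rightarrow> nat \<Rightarrow> nat \<Rightarrow> int \<Rightarrow> real \<Rightarrow> real" where
  "phi t hi g K i x = (if i = int g then 1 else zbspline t hi K i x)"

definition alpha :: "(int \<Rightarrow> real) \<Rightarrow> nat \<Rightarrow> nat \<Rightarrow> int \<Rightarrow> int \<Rightarrow> real" where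
  "alpha t g K i p = (if i = int g then 1 else
     (real K + 1) * ((if p = i then 1 / (t (i + int K + 1) - t i) else 0)
                    - (if p = i + 1 then 1 / (t (i + int K + 2) - t (i + 1)) else 0)))"

context knots begin

lemma phi_expand: "i \<in> {- int K..int g} \<Longrightarrow> lo \<le> x \<Longrightarrow> x \<le> hi \<Longrightarrow>
   phi t hi g K i x = (\<Sum>p\<in>{- int K..int g}. alpha t g K i p * B K p x)"
proof -
  assume i: "i \<in> {- int K..int g}" and x: "lo \<le> x" "x \<le> hi"
  show ?thesis
  proof (cases "i = int g")
    case True
    then show ?thesis unfolding phi_def alpha_def using B_PU[of K K x] x by simp
  next
    case False
    then have i1: "i + 1 \<in> {- int K..int g}" using i by auto
    have "(\<Sum>p\<in>{- int K..int g}. alpha t g K i p * B K p x)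
      = (\<Sum>p\<in>{- int K..int g}. (if p = i then (real K + 1) * B K i x / (t (i + int K + 1) - t i) else 0)
                         - (if p = i + 1 then (real K + 1) * B K (i+1) x / (t (i + int K + 2) - t (i + 1)) else 0))"
      by (intro sum.cong refl) (auto simp: alpha_def False divide_inverse algebra_simps simp del: bspline.simps)
    also have "\<dots> = (real K + 1) * B K i x / (t (i + int K + 1) - t i) - (real K + 1) * B K (i+1) x / (t (i + int K + 2) - t (i + 1))"
      using i i1 by (simp only: sum_subtractf sum.delta finite_atLeastAtMost if_True)
    also have "\<dots> = phi t hi g K i x"
      unfolding phi_def zbspline_def using False by (simp add: algebra_simps del: bspline.simps)
    finally show ?thesis by simp
  qed
qed

lemma phi_int: "i \<in> {- int K..int g} \<Longrightarrow> (phi t hi g K i has_integral (if i = int g then hi - lo else 0)) {lo..hi}"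
proof (cases "i = int g")
  case True
  then show ?thesis unfolding phi_def using has_integral_const_real[of "1::real" lo hi] lo_hi by simp
next
  case False
  assume i: "i \<in> {- int K..int g}"
  then have "(zbspline t hi K i has_integral 0) {lo..hi}" using False by (intro Z_int) auto
  then show ?thesis unfolding phi_def using False by simp
qed

lemma phi_meas: "phi t hi g K i \<in> borel_measurable borel"
  unfolding phi_def by (cases "i = int g") (simp_all add: zbspline_meas)

lemma phi_bound: "i \<in> {- int K..int g} \<Longrightarrow> \<exists>M. \<forall>x\<in>{lo..hi}. \<bar>phi t hi g K i x\<bar> \<le> M"
proof (cases "i = int g")
  case True
  then show ?thesis unfolding phi_def by (intro exI[of _ 1]) simp
next
  case False
  assume i: "i \<in> {- int K..int g}"
  then have i1: "i \<le> int g - 1" using False by auto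
  show ?thesis unfolding phi_def using False Z_bound[of K i] i1 i
    by (intro exI[of _ "(real K + 1) * (1 / (t (i + int K + 1) - t i) + 1 / (t (i + int K + 2) - t (i + 1)))"]) auto
qed

lemma phi_indep:
  assumes z: "\<And>x. lo \<le> x \<Longrightarrow> x \<le> hi \<Longrightarrow> (\<Sum>i\<in>{- int K..int g}. c i * phi t hi g K i x) = 0"
  shows "\<forall>i\<in>{- int K..int g}. c i = 0"
proof -
  let ?I = "{- int K..int g}"
  let ?S = "{- int K..int g - 1}"
  have "((\<lambda>x. \<Sum>i\<in>?I. c i * phi t hi g K i x) has_integral (\<Sum>i\<in>?I. c i * (if i = int g then hi - lo else 0))) {lo..hi}"
    by (intro has_integral_sum has_integral_mult_right phi_int) auto
  moreover have "((\<lambda>x. \<Sum>i\<in>?I. c i * phi t hi g K i x) has_integral 0) {lo..hi} = ((\<lambda>x. 0::real) has_integral 0) {lo..hi}"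
    by (rule has_integral_cong) (use z in auto)
  then have "((\<lambda>x. \<Sum>i\<in>?I. c i * phi t hi g K i x) has_integral 0) {lo..hi}"
    using has_integral_0 by simp
  ultimately have "(\<Sum>i\<in>?I. c i * (if i = int g then hi - lo else 0)) = 0" by (rule has_integral_unique)
  then have "c (int g) * (hi - lo) = 0" by (simp add: if_distrib cong: if_cong)
  then have cg: "c (int g) = 0" using lo_hi by simp
  define c' where "c' p = (if p \<in> ?S then c p else 0)" for p
  define E where "E x p = (real K + 1) * B K p x / (t (p + int K + 1) - t p)" for x p
  define d where "d p = (c' p - c' (p - 1)) * ((real K + 1) / (t (p + int K + 1) - t p))" for p
  have IS: "?I = insert (int g) ?S" by auto
  have zE: "zbspline t hi K i x = E x i - E x (i + 1)" for i x
  proof -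
    have "t (i + 1 + int K + 1) = t (i + int K + 2)" by (rule arg_cong[where f=t]) simp
    then show ?thesis unfolding zbspline_def E_def by (simp add: algebra_simps)
  qed
  have B0: "(\<Sum>p\<in>?I. d p * B K p x) = 0" if x: "lo \<le> x" "x \<le> hi" for x
  proof -
    have "0 = (\<Sum>i\<in>?I. c i * phi t hi g K i x)" using z x by simp
    also have "\<dots> = (\<Sum>i\<in>?S. c i * phi t hi g K i x)" unfolding IS using cg by simp
    also have "\<dots> = (\<Sum>i\<in>?S. c i * E x i) - (\<Sum>i\<in>?S. c i * E x (i+1))"
      by (simp add: phi_def zE algebra_simps sum_subtractf del: bspline.simps)
    also have "(\<Sum>i\<in>?S. c i * E x i) = (\<Sum>p\<in>?I. c' p * E x p)"
      unfolding IS c'_def by (simp add: cong: if_cong)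
    also have "(\<Sum>i\<in>?S. c i * E x (i+1)) = (\<Sum>i\<in>?S. c' ((i+1) - 1) * E x (i+1))"
      unfolding c'_def by (intro sum.cong) auto
    also have "\<dots> = (\<Sum>p\<in>{- int K + 1..int g}. c' (p - 1) * E x p)"
      using sum_shift_int[of "\<lambda>p. c' (p - 1) * E x p" "- int K" "int g - 1"] by simp
    also have "\<dots> = (\<Sum>p\<in>?I. c' (p - 1) * E x p)"
    proof -
      have "?I = insert (- int K) {- int K + 1..int g}" by auto
      moreover have "c' (- int K - 1) = 0" unfolding c'_def by simp
      ultimately show ?thesis by simp
    qed
    also have "(\<Sum>p\<in>?I. c' p * E x p) - (\<Sum>p\<in>?I. c' (p - 1) * E x p) = (\<Sum>p\<in>?I. d p * B K p x)"
      unfolding sum_subtractf[symmetric] d_def E_def by (intro sum.cong) (auto simp: divide_inverse algebra_simps)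
    finally show ?thesis by simp
  qed
  have dz: "\<forall>p\<in>?I. d p = 0" by (rule B_indep) (use B0 in auto)
  have step: "c' p = c' (p - 1)" if "p \<in> ?I" for p
  proof -
    have "0 < t (p + int K + 1) - t p" by (rule Delta_pos) (use that in auto)
    then show ?thesis using dz that unfolding d_def by auto
  qed
  have all: "c' (- int K - 1 + int n) = 0" for n
  proof (induction n)
    case 0
    then show ?case unfolding c'_def by simp
  next
    case (Suc n)
    define p where "p = - int K - 1 + int (Suc n)"
    have pm: "p - 1 = - int K - 1 + int n" unfolding p_def by simp
    show ?case
    proof (cases "p \<in> ?I")
      case True
      have "c' p = c' (- int K - 1 + int n)" using step[OF True] unfolding pm .
      then have "c' p = 0" using Suc.IH by simp
      then show ?thesis unfolding p_def .
    next
      case False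
      then have "p \<notin> ?S" by auto
      then show ?thesis unfolding c'_def p_def by simp
    qed
  qed
  show ?thesis
  proof
    fix i assume i: "i \<in> ?I"
    show "c i = 0"
    proof (cases "i = int g")
      case True
      then show ?thesis using cg by simp
    next
      case False
      then have iS: "i \<in> ?S" using i by auto
      have "i = - int K - 1 + int (nat (i + int K + 1))" using i by simp
      then have "c' i = 0" using all by metis
      then show ?thesis using iS unfolding c'_def by simp
    qed
  qed
qed

end

interpretation fv: vector_space fscale
  by unfold_locales (auto simp: fscale_def fun_eq_iff algebra_simps)

lemma fsum_apply: "(\<Sum>v\<in>A. fscale (u v) (F v)) z = (\<Sum>v\<in>A. u v * F v z)"
proof (cases "finite A")
  case True
  then show ?thesis by (induction A rule: finite_induct) (auto simp: fscale_def)
qed simp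

lemma fscale_apply: "fscale r f z = r * f z"
  by (simp add: fscale_def)

lemma span_img: "finite P \<Longrightarrow> fv.span (F ` P) = range (\<lambda>c. \<Sum>p\<in>P. fscale (c p) (F p))"
proof
  assume fin: "finite P"
  show "range (\<lambda>c. \<Sum>p\<in>P. fscale (c p) (F p)) \<subseteq> fv.span (F ` P)"
  proof clarify
    fix c
    show "(\<Sum>p\<in>P. fscale (c p) (F p)) \<in> fv.span (F ` P)"
      by (rule fv.span_sum) (rule fv.span_scale, rule fv.span_base, simp)
  qed
  show "fv.span (F ` P) \<subseteq> range (\<lambda>c. \<Sum>p\<in>P. fscale (c p) (F p))"
  proof (rule fv.span_minimal)
    show "F ` P \<subseteq> range (\<lambda>c. \<Sum>p\<in>P. fscale (c p) (F p))"
    proof clarify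
      fix p assume p: "p \<in> P"
      have "(\<Sum>q\<in>P. fscale (if q = p then 1 else 0) (F q)) = F p"
        using fin p by (intro ext) (simp add: fsum_apply mult_delta_left)
      then show "F p \<in> range (\<lambda>c. \<Sum>p\<in>P. fscale (c p) (F p))"
        by (intro range_eqI[where x="\<lambda>q. if q = p then 1 else 0"]) simp
    qed
    show "fv.subspace (range (\<lambda>c. \<Sum>p\<in>P. fscale (c p) (F p)))"
      unfolding fv.subspace_def
    proof (intro conjI ballI allI)
      show "0 \<in> range (\<lambda>c. \<Sum>p\<in>P. fscale (c p) (F p))"
        by (rule range_eqI[of _ _ "\<lambda>_. 0"]) (rule ext, simp add: fsum_apply)
      fix x y assume "x \<in> range (\<lambda>c. \<Sum>p\<in>P. fscale (c p) (F p))" "y \<in> range (\<lambda>c. \<Sum>p\<in>P. fscale (c p) (F p))"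
      then obtain c1 c2 where "x = (\<Sum>p\<in>P. fscale (c1 p) (F p))" "y = (\<Sum>p\<in>P. fscale (c2 p) (F p))" by auto
      then show "x + y \<in> range (\<lambda>c. \<Sum>p\<in>P. fscale (c p) (F p))"
        by (intro range_eqI[of _ _ "\<lambda>p. c1 p + c2 p"]) (simp add: fun_eq_iff fsum_apply sum.distrib algebra_simps)
    next
      fix r x assume "x \<in> range (\<lambda>c. \<Sum>p\<in>P. fscale (c p) (F p))"
      then obtain c1 where "x = (\<Sum>p\<in>P. fscale (c1 p) (F p))" by auto
      then show "fscale r x \<in> range (\<lambda>c. \<Sum>p\<in>P. fscale (c p) (F p))"
        by (intro range_eqI[of _ _ "\<lambda>p. r * c1 p"]) (rule ext, simp add: fsum_apply fscale_apply sum_distrib_left algebra_simps)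
    qed
  qed
qed

lemma indep_from_coeffs:
  assumes fin: "finite P"
    and co: "\<And>C. (\<And>z. (\<Sum>p\<in>P. C p * F p z) = 0) \<Longrightarrow> \<forall>p\<in>P. C p = 0"
  shows "inj_on F P" "fv.independent (F ` P)"
proof -
  show inj: "inj_on F P"
  proof (rule inj_onI, rule ccontr)
    fix p q assume pq: "p \<in> P" "q \<in> P" "F p = F q" "p \<noteq> q"
    define C where "C r = (if r = p then 1 else if r = q then -1 else (0::real))" for r
    have "(\<Sum>r\<in>P. C r * F r z) = 0" for z
    proof -
      have "(\<Sum>r\<in>P. C r * F r z) = (\<Sum>r\<in>P. (if r = p then F p z else 0) - (if r = q then F q z else 0))"
        unfolding C_def using pq by (intro sum.cong) auto
      also have "\<dots> = 0" using pq fin by (simp add: sum_subtractf)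
      finally show ?thesis .
    qed
    then have "C p = 0" using co pq by blast
    then show False unfolding C_def by simp
  qed
  show "fv.independent (F ` P)"
  proof (rule fv.independent_if_scalars_zero)
    show "finite (F ` P)" using fin by simp
    fix f x assume s: "(\<Sum>x\<in>F ` P. fscale (f x) x) = 0" and x: "x \<in> F ` P"
    have "(\<Sum>x\<in>F ` P. fscale (f x) x) = (\<Sum>p\<in>P. fscale (f (F p)) (F p))"
      by (simp add: sum.reindex[OF inj] o_def)
    then have "(\<Sum>p\<in>P. f (F p) * F p z) = 0" for z
      using s fsum_apply[of "\<lambda>p. f (F p)" F P z] by (metis zero_fun_apply)
    then have "\<forall>p\<in>P. f (F p) = 0" by (rule co)
    then show "f x = 0" using x by auto
  qed
qed

lemma span_subset_by_card:
  assumes fA: "finite A" and indT: "fv.independent T" and fT: "finite T"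
    and TA: "T \<subseteq> fv.span A" and card: "card A \<le> card T"
  shows "fv.span A \<subseteq> fv.span T"
proof
  fix v assume v: "v \<in> fv.span A"
  show "v \<in> fv.span T"
  proof (rule ccontr)
    assume nv: "v \<notin> fv.span T"
    then have ind: "fv.independent (insert v T)" by (rule fv.independent_insertI[OF _ indT])
    have sub: "insert v T \<subseteq> fv.span A" using v TA by auto
    have "card (insert v T) \<le> card A" using fv.independent_span_bound[OF fA ind sub] by simp
    moreover have "v \<notin> T" using nv fv.span_base by blast
    then have "card (insert v T) = card T + 1" using fT by simp
    ultimately show False using card by simp
  qed
qed

lemma knots_from_ext:
  assumes e: "ext_knots lam lo hi g k"
  shows "knots (\<lambda>j. lam (max (- int k) (min (int g + int k + 1) j))) g lo hi"
proof
  have E: "lo < hi" "lam 0 = lo" "lam (int g + 1) = hi" "\<forall>i\<in>{0..int g}. lam i < lam (i + 1)"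
     "\<forall>i\<in>{- int k..0}. lam i = lo" "\<forall>i\<in>{int g + 1..int g + int k + 1}. lam i = hi"
    using e unfolding ext_knots_def by auto
  fix j :: int
  show "lam (max (- int k) (min (int g + int k + 1) j)) = lo" if "j \<le> 0"
  proof -
    have "max (- int k) (min (int g + int k + 1) j) \<in> {- int k..0}" using that by simp
    then show ?thesis using E(5) by blast
  qed
  show "lam (max (- int k) (min (int g + int k + 1) j)) = hi" if "int g + 1 \<le> j"
  proof -
    have "max (- int k) (min (int g + int k + 1) j) \<in> {int g + 1..int g + int k + 1}" using that by simp
    then show ?thesis using E(6) by blast
  qed
next
  have E: "\<forall>i\<in>{0..int g}. lam i < lam (i + 1)" using assms unfolding ext_knots_def by auto
  have inc: "lam i < lam (i + 1 + int n)" if "0 \<le> i" "i + 1 + int n \<le> int g + 1" for i n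
    using that
  proof (induction n)
    case 0
    then show ?case using E by auto
  next
    case (Suc n)
    then have h1: "lam i < lam (i + 1 + int n)" by simp
    have m: "i + 1 + int n \<in> {0..int g}" using Suc.prems by simp
    have h2: "lam (i + 1 + int n) < lam (i + 1 + int n + 1)" using E m by blast
    have eq: "i + 1 + int (Suc n) = i + 1 + int n + 1" by simp
    show ?case unfolding eq using h1 h2 by (rule less_trans)
  qed
  fix i j :: int
  assume ij: "0 \<le> i" "i < j" "j \<le> int g + 1"
  have c1: "max (- int k) (min (int g + int k + 1) i) = i" and c2: "max (- int k) (min (int g + int k + 1) j) = j"
    using ij by auto
  have eqj: "i + 1 + int (nat (j - i - 1)) = j" using ij by simp
  have "lam i < lam (i + 1 + int (nat (j - i - 1)))" by (rule inc) (use ij eqj in simp_all)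
  then have "lam i < lam j" unfolding eqj .
  then show "lam (max (- int k) (min (int g + int k + 1) i)) < lam (max (- int k) (min (int g + int k + 1) j))"
    unfolding c1 c2 .
qed

lemma bspline_clamp:
  "- int k \<le> i \<Longrightarrow> i + int m + 1 \<le> int g + int k + 1 \<Longrightarrow>
   bspline lam hi m i x = bspline (\<lambda>j. lam (max (- int k) (min (int g + int k + 1) j))) hi m i x"
proof (induction m arbitrary: i)
  case 0
  then show ?case by simp
next
  case (Suc m)
  have IH1: "bspline lam hi m i x = bspline (\<lambda>j. lam (max (- int k) (min (int g + int k + 1) j))) hi m i x"
    by (rule Suc.IH) (use Suc.prems in simp_all)
  have IH2: "bspline lam hi m (i+1) x = bspline (\<lambda>j. lam (max (- int k) (min (int g + int k + 1) j))) hi m (i+1) x"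
    by (rule Suc.IH) (use Suc.prems in simp_all)
  have c: "max (- int k) (min (int g + int k + 1) j) = j" if "- int k \<le> j" "j \<le> int g + int k + 1" for j
    using that by simp
  show ?case using Suc.prems by (simp add: IH1 IH2 c)
qed

lemma zbspline_clamp:
  "- int k \<le> i \<Longrightarrow> i \<le> int g - 1 \<Longrightarrow>
   zbspline lam hi k i x = zbspline (\<lambda>j. lam (max (- int k) (min (int g + int k + 1) j))) hi k i x"
  unfolding zbspline_def
  by (subst (1 2) bspline_clamp[where g=g and k=k]) (simp_all)

lemma restr_sum:
  assumes "finite A" "finite B"
  shows "restr a b c d (\<lambda>(x, y). \<Sum>i\<in>A. \<Sum>j\<in>B. coef i j * f i x * h j y)
       = (\<Sum>p\<in>A \<times> B. fscale (coef (fst p) (snd p)) (restr a b c d (\<lambda>(x, y). f (fst p) x * h (snd p) y)))"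
proof (rule ext)
  fix z :: "real \<times> real"
  obtain x y where z: "z = (x, y)" by (cases z)
  have "(\<Sum>i\<in>A. \<Sum>j\<in>B. coef i j * f i x * h j y) = (\<Sum>p\<in>A \<times> B. coef (fst p) (snd p) * (f (fst p) x * h (snd p) y))"
    by (simp add: sum.cartesian_product case_prod_beta algebra_simps)
  then show "restr a b c d (\<lambda>(x, y). \<Sum>i\<in>A. \<Sum>j\<in>B. coef i j * f i x * h j y) z
       = (\<Sum>p\<in>A \<times> B. fscale (coef (fst p) (snd p)) (restr a b c d (\<lambda>(x, y). f (fst p) x * h (snd p) y))) z"
    unfolding fsum_apply fscale_apply z
    by (cases "(x, y) \<in> {a..b} \<times> {c..d}") (simp_all only: restr_def if_True if_False case_prod_conv mult_zero_right sum.neutral_const)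
qed

lemma restr_cong:
  "(\<And>x y. x \<in> {a..b} \<Longrightarrow> y \<in> {c..d} \<Longrightarrow> f (x, y) = f' (x, y)) \<Longrightarrow> restr a b c d f = restr a b c d f'"
  unfolding restr_def by (auto simp: fun_eq_iff)

lemma spline_space_span:
  "spline_space a b c d g h k l lam mu = fv.span ((\<lambda>p. restr a b c d (\<lambda>(x,y). bspline lam b k (fst p) x * bspline mu d l (snd p) y)) ` ({- int k..int g} \<times> {- int l..int h}))"
  (is "?S = fv.span (?Bf ` ?K)")
proof -
  have sp: "fv.span (?Bf ` ?K) = range (\<lambda>c. \<Sum>p\<in>?K. fscale (c p) (?Bf p))"
    by (rule span_img) simp
  show ?thesis unfolding sp
  proof
    show "?S \<subseteq> range (\<lambda>c. \<Sum>p\<in>?K. fscale (c p) (?Bf p))"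
    proof
      fix s assume "s \<in> ?S"
      then obtain coef where s: "s = restr a b c d (\<lambda>(x, y). \<Sum>i \<in> {- int k..int g}. \<Sum>j \<in> {- int l..int h}.
                 coef i j * bspline lam b k i x * bspline mu d l j y)"
        unfolding spline_space_def by auto
      show "s \<in> range (\<lambda>c. \<Sum>p\<in>?K. fscale (c p) (?Bf p))"
        unfolding s restr_sum[OF finite_atLeastAtMost_int finite_atLeastAtMost_int]
        by (rule range_eqI[of _ _ "\<lambda>p. coef (fst p) (snd p)"]) simp
    qed
    show "range (\<lambda>c. \<Sum>p\<in>?K. fscale (c p) (?Bf p)) \<subseteq> ?S"
    proof clarify
      fix C :: "int \<times> int \<Rightarrow> real"
      have "(\<Sum>p\<in>?K. fscale (C p) (?Bf p)) = restr a b c d (\<lambda>(x, y). \<Sum>i \<in> {- int k..int g}. \<Sum>j \<in> {- int l..int h}.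
                 (\<lambda>i j. C (i, j)) i j * bspline lam b k i x * bspline mu d l j y)"
        unfolding restr_sum[OF finite_atLeastAtMost_int finite_atLeastAtMost_int] by simp
      then show "(\<Sum>p\<in>?K. fscale (C p) (?Bf p)) \<in> ?S" unfolding spline_space_def
        by (intro CollectI exI[of _ "\<lambda>i j. C (i, j)"]) simp
    qed
  qed
qed

theorem theorem4:
  fixes a b c d :: real and g h k l :: nat and lam mu :: "int \<Rightarrow> real"
  assumes "a < b" and "c < d"
    and "ext_knots lam a b g k" and "ext_knots mu c d h l"
  defines "Zsp \<equiv> zero_int_space a b c d g h k l lam mu"
    and "ZB \<equiv> zb_fun a b c d k l lam mu"
    and "I \<equiv> zb_index g h k l"
  shows "inj_on ZB I \<and> ZB ` I \<subseteq> Zsp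
         \<and> module.independent fscale (ZB ` I)
         \<and> module.span fscale (ZB ` I) = Zsp
         \<and> vector_space.dim fscale Zsp = (g + k + 1) * (h + l + 1) - 1
         \<and> vector_space.dim fscale Zsp = (g + k) * (h + l) + g + k + h + l"
proof -
  note ab = assms(1) and cd = assms(2) and ex = assms(3) and ey = assms(4)
  define tx where "tx = (\<lambda>j. lam (max (- int k) (min (int g + int k + 1) j)))"
  define ty where "ty = (\<lambda>j. mu (max (- int l) (min (int h + int l + 1) j)))"
  interpret X: knots tx g a b unfolding tx_def by (rule knots_from_ext[OF ex])
  interpret Y: knots ty h c d unfolding ty_def by (rule knots_from_ext[OF ey])
  define Kx where "Kx = {- int k..int g}"
  define Ky where "Ky = {- int l..int h}"
  define KK where "KK = Kx \<times> Ky"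
  define K0 where "K0 = KK - {(int g, int h)}"
  define Bf where "Bf p = restr a b c d (\<lambda>(x,y). bspline lam b k (fst p) x * bspline mu d l (snd p) y)" for p
  define T where "T p = restr a b c d (\<lambda>(x,y). phi tx b g k (fst p) x * phi ty d h l (snd p) y)" for p
  define S where "S = spline_space a b c d g h k l lam mu"
  have finK: "finite KK" "finite K0" unfolding KK_def K0_def Kx_def Ky_def by auto
  have ghK: "(int g, int h) \<in> KK" unfolding KK_def Kx_def Ky_def by auto
  have KK0: "KK = insert (int g, int h) K0" unfolding K0_def using ghK by auto
  have C1: "S = fv.span (Bf ` KK)"
    unfolding S_def Bf_def KK_def Kx_def Ky_def by (rule spline_space_span)
  have Tval: "T p (x, y) = phi tx b g k (fst p) x * phi ty d h l (snd p) y" if "x \<in> {a..b}" "y \<in> {c..d}" for p x y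
    unfolding T_def restr_def using that by simp
  have C2: "T p \<in> S" if p: "p \<in> KK" for p
  proof -
    have p1: "fst p \<in> {- int k..int g}" and p2: "snd p \<in> {- int l..int h}"
      using p unfolding KK_def Kx_def Ky_def by auto
    have "T p = restr a b c d (\<lambda>(x, y). \<Sum>i \<in> {- int k..int g}. \<Sum>j \<in> {- int l..int h}.
                 (\<lambda>i j. alpha tx g k (fst p) i * alpha ty h l (snd p) j) i j * bspline lam b k i x * bspline mu d l j y)"
      unfolding T_def
    proof (rule restr_cong)
      fix x y assume x: "x \<in> {a..b}" and y: "y \<in> {c..d}"
      have ex1: "phi tx b g k (fst p) x = (\<Sum>i\<in>{- int k..int g}. alpha tx g k (fst p) i * bspline lam b k i x)"
      proof -
        have "phi tx b g k (fst p) x = (\<Sum>i\<in>{- int k..int g}. alpha tx g k (fst p) i * bspline tx b k i x)"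
          using X.phi_expand[OF p1, of x] x by simp
        also have "\<dots> = (\<Sum>i\<in>{- int k..int g}. alpha tx g k (fst p) i * bspline lam b k i x)"
        proof (rule sum.cong)
          fix i assume "i \<in> {- int k..int g}"
          then have "bspline lam b k i x = bspline tx b k i x"
            unfolding tx_def by (intro bspline_clamp) auto
          then show "alpha tx g k (fst p) i * bspline tx b k i x = alpha tx g k (fst p) i * bspline lam b k i x"
            by (simp only:)
        qed (rule refl)
        finally show ?thesis .
      qed
      have ex2: "phi ty d h l (snd p) y = (\<Sum>j\<in>{- int l..int h}. alpha ty h l (snd p) j * bspline mu d l j y)"
      proof -
        have "phi ty d h l (snd p) y = (\<Sum>j\<in>{- int l..int h}. alpha ty h l (snd p) j * bspline ty d l j y)"
          using Y.phi_expand[OF p2, of y] y by simp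
        also have "\<dots> = (\<Sum>j\<in>{- int l..int h}. alpha ty h l (snd p) j * bspline mu d l j y)"
        proof (rule sum.cong)
          fix j assume "j \<in> {- int l..int h}"
          then have "bspline mu d l j y = bspline ty d l j y"
            unfolding ty_def by (intro bspline_clamp) auto
          then show "alpha ty h l (snd p) j * bspline ty d l j y = alpha ty h l (snd p) j * bspline mu d l j y"
            by (simp only:)
        qed (rule refl)
        finally show ?thesis .
      qed
      show "(\<lambda>(x, y). phi tx b g k (fst p) x * phi ty d h l (snd p) y) (x, y) =
          (\<lambda>(x, y). \<Sum>i \<in> {- int k..int g}. \<Sum>j \<in> {- int l..int h}.
                 (\<lambda>i j. alpha tx g k (fst p) i * alpha ty h l (snd p) j) i j * bspline lam b k i x * bspline mu d l j y) (x, y)"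
        unfolding case_prod_conv ex1 ex2 sum_product by (simp only: mult.assoc mult.left_commute)
    qed
    then show ?thesis unfolding S_def spline_space_def
      by (intro CollectI exI[of _ "\<lambda>i j. alpha tx g k (fst p) i * alpha ty h l (snd p) j"])
  qed
  have C3: "\<forall>p\<in>KK. C p = 0" if z: "\<And>z. (\<Sum>p\<in>KK. C p * T p z) = 0" for C
  proof -
    have inner: "\<forall>i\<in>Kx. (\<Sum>j\<in>Ky. C (i,j) * phi ty d h l j y) = 0" if y: "c \<le> y" "y \<le> d" for y
    proof -
      have "(\<Sum>i\<in>{- int k..int g}. (\<Sum>j\<in>Ky. C (i,j) * phi ty d h l j y) * phi tx b g k i x) = 0"
        if x: "a \<le> x" "x \<le> b" for x
      proof -
        have "(\<Sum>p\<in>KK. C p * T p (x,y)) = (\<Sum>p\<in>Kx \<times> Ky. C p * (phi tx b g k (fst p) x * phi ty d h l (snd p) y))"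
          unfolding KK_def using x y by (intro sum.cong refl) (simp add: Tval)
        also have "\<dots> = (\<Sum>i\<in>Kx. \<Sum>j\<in>Ky. C (i,j) * (phi tx b g k i x * phi ty d h l j y))"
          by (simp add: sum.cartesian_product case_prod_beta)
        also have "\<dots> = (\<Sum>i\<in>Kx. (\<Sum>j\<in>Ky. C (i,j) * phi ty d h l j y) * phi tx b g k i x)"
          by (intro sum.cong refl) (simp add: sum_distrib_left sum_distrib_right mult_ac)
        finally show ?thesis using z[of "(x,y)"] unfolding Kx_def by simp
      qed
      then show ?thesis using X.phi_indep[where K=k and c="\<lambda>i. \<Sum>j\<in>Ky. C (i,j) * phi ty d h l j y"] unfolding Kx_def by blast
    qed
    show ?thesis
    proof
      fix p assume p: "p \<in> KK"
      then obtain i j where pij: "p = (i,j)" "i \<in> Kx" "j \<in> Ky" unfolding KK_def by auto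
      have "\<forall>j\<in>{- int l..int h}. C (i,j) = 0"
        by (rule Y.phi_indep) (use inner pij in \<open>auto simp: Ky_def\<close>)
      then show "C p = 0" using pij unfolding Ky_def by auto
    qed
  qed
  have injT: "inj_on T KK" and indT: "fv.independent (T ` KK)"
    using indep_from_coeffs[OF finK(1), of T] C3 by blast+
  have C5: "fv.span (Bf ` KK) \<subseteq> fv.span (T ` KK)"
  proof (rule span_subset_by_card)
    show "finite (Bf ` KK)" "finite (T ` KK)" using finK by auto
    show "fv.independent (T ` KK)" by (rule indT)
    show "T ` KK \<subseteq> fv.span (Bf ` KK)" using C2 C1 by auto
    have "card (Bf ` KK) \<le> card KK" by (rule card_image_le[OF finK(1)])
    also have "\<dots> = card (T ` KK)" using card_image[OF injT] by simp
    finally show "card (Bf ` KK) \<le> card (T ` KK)" .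
  qed
  have Tint: "(T p has_integral (if p = (int g, int h) then (b - a) * (d - c) else 0)) ({a..b} \<times> {c..d})"
    if p: "p \<in> KK" for p
  proof -
    have p1: "fst p \<in> {- int k..int g}" and p2: "snd p \<in> {- int l..int h}"
      using p unfolding KK_def Kx_def Ky_def by auto
    obtain Mf where Mf: "\<forall>x\<in>{a..b}. \<bar>phi tx b g k (fst p) x\<bar> \<le> Mf" using X.phi_bound[OF p1] by blast
    obtain Mg where Mg: "\<forall>y\<in>{c..d}. \<bar>phi ty d h l (snd p) y\<bar> \<le> Mg" using Y.phi_bound[OF p2] by blast
    have i1: "integral {a..b} (phi tx b g k (fst p)) = (if fst p = int g then b - a else 0)"
      by (rule integral_unique[OF X.phi_int[OF p1]])
    have i2: "integral {c..d} (phi ty d h l (snd p)) = (if snd p = int h then d - c else 0)"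
      by (rule integral_unique[OF Y.phi_int[OF p2]])
    have "((\<lambda>z. phi tx b g k (fst p) (fst z) * phi ty d h l (snd p) (snd z)) has_integral
        (integral {a..b} (phi tx b g k (fst p)) * integral {c..d} (phi ty d h l (snd p)))) ({a..b} \<times> {c..d})"
      by (rule prod_integral[OF X.phi_meas Y.phi_meas]) (use Mf Mg in auto)
    moreover have "integral {a..b} (phi tx b g k (fst p)) * integral {c..d} (phi ty d h l (snd p))
        = (if p = (int g, int h) then (b - a) * (d - c) else 0)"
      unfolding i1 i2 by (cases p) auto
    ultimately have "((\<lambda>z. phi tx b g k (fst p) (fst z) * phi ty d h l (snd p) (snd z)) has_integral
        (if p = (int g, int h) then (b - a) * (d - c) else 0)) ({a..b} \<times> {c..d})" by simp
    moreover have "((\<lambda>z. phi tx b g k (fst p) (fst z) * phi ty d h l (snd p) (snd z)) has_integral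
        (if p = (int g, int h) then (b - a) * (d - c) else 0)) ({a..b} \<times> {c..d})
      = (T p has_integral (if p = (int g, int h) then (b - a) * (d - c) else 0)) ({a..b} \<times> {c..d})"
      by (rule has_integral_cong) (auto simp: Tval)
    ultimately show ?thesis by simp
  qed
  have sumint: "((\<Sum>p\<in>P. fscale (C p) (T p)) has_integral (\<Sum>p\<in>P. C p * (if p = (int g, int h) then (b - a) * (d - c) else 0))) ({a..b} \<times> {c..d})"
    if P: "P \<subseteq> KK" for P C
  proof -
    have fP: "finite P" using finK(1) P by (rule finite_subset[rotated])
    have e: "(\<Sum>p\<in>P. fscale (C p) (T p)) = (\<lambda>z. \<Sum>p\<in>P. C p * T p z)" by (rule ext) (rule fsum_apply)
    show ?thesis unfolding e
      by (intro has_integral_sum[OF fP] has_integral_mult_right Tint) (use P in auto)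
  qed
  have fscale0: "fscale 0 f = 0" for f :: "real \<times> real \<Rightarrow> real" by (simp add: fscale_def fun_eq_iff)
  have spT: "fv.span (T ` KK) = range (\<lambda>C. \<Sum>p\<in>KK. fscale (C p) (T p))" by (rule span_img[OF finK(1)])
  have spT0: "fv.span (T ` K0) = range (\<lambda>C. \<Sum>p\<in>K0. fscale (C p) (T p))" by (rule span_img[OF finK(2)])
  have Zsp_eq: "Zsp = {s \<in> S. integral ({a..b} \<times> {c..d}) s = 0}" unfolding Zsp_def zero_int_space_def S_def ..
  have C7: "Zsp = fv.span (T ` K0)"
  proof
    show "Zsp \<subseteq> fv.span (T ` K0)"
    proof
      fix s assume "s \<in> Zsp"
      then have sS: "s \<in> S" and si: "integral ({a..b} \<times> {c..d}) s = 0" unfolding Zsp_eq by auto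
      have "s \<in> fv.span (T ` KK)" using sS C1 C5 by auto
      then obtain C where s: "s = (\<Sum>p\<in>KK. fscale (C p) (T p))" unfolding spT by auto
      have "(s has_integral (\<Sum>p\<in>KK. C p * (if p = (int g, int h) then (b - a) * (d - c) else 0))) ({a..b} \<times> {c..d})"
        unfolding s by (rule sumint) simp
      moreover have "(\<Sum>p\<in>KK. C p * (if p = (int g, int h) then (b - a) * (d - c) else 0)) = C (int g, int h) * ((b - a) * (d - c))"
        using finK ghK by (simp add: if_distrib cong: if_cong)
      ultimately have "C (int g, int h) * ((b - a) * (d - c)) = 0" using si integral_unique by metis
      then have C0: "C (int g, int h) = 0" using ab cd by simp
      have "(\<Sum>p\<in>KK. fscale (C p) (T p)) = fscale (C (int g, int h)) (T (int g, int h)) + (\<Sum>p\<in>K0. fscale (C p) (T p))"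
        unfolding KK0 by (rule sum.insert[OF finK(2)]) (simp add: K0_def)
      then have "s = (\<Sum>p\<in>K0. fscale (C p) (T p))"
        unfolding s C0 fscale0 by simp
      then show "s \<in> fv.span (T ` K0)" unfolding spT0 by auto
    qed
    show "fv.span (T ` K0) \<subseteq> Zsp"
    proof
      fix v assume v: "v \<in> fv.span (T ` K0)"
      have "fv.span (T ` K0) \<subseteq> S"
      proof (rule fv.span_minimal)
        show "T ` K0 \<subseteq> S" using C2 unfolding K0_def by auto
        show "fv.subspace S" unfolding C1 by (rule fv.subspace_span)
      qed
      then have vS: "v \<in> S" using v by auto
      obtain C where vC: "v = (\<Sum>p\<in>K0. fscale (C p) (T p))" using v unfolding spT0 by auto
      have "(v has_integral (\<Sum>p\<in>K0. C p * (if p = (int g, int h) then (b - a) * (d - c) else 0))) ({a..b} \<times> {c..d})"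
        unfolding vC by (rule sumint) (auto simp: K0_def)
      moreover have "(\<Sum>p\<in>K0. C p * (if p = (int g, int h) then (b - a) * (d - c) else 0)) = 0"
        by (rule sum.neutral) (auto simp: K0_def)
      ultimately have "integral ({a..b} \<times> {c..d}) v = 0" using integral_unique by metis
      then show "v \<in> Zsp" unfolding Zsp_eq using vS by simp
    qed
  qed
  have hx: "phi tx b g k i x = zbspline lam b k i x" if "i \<in> {- int k..int g - 1}" for i x
  proof -
    have "zbspline lam b k i x = zbspline tx b k i x"
      unfolding tx_def by (rule zbspline_clamp) (use that in auto)
    then show ?thesis unfolding phi_def using that by simp
  qed
  have hy: "phi ty d h l j y = zbspline mu d l j y" if "j \<in> {- int l..int h - 1}" for j y
  proof -
    have "zbspline mu d l j y = zbspline ty d l j y"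
      unfolding ty_def by (rule zbspline_clamp) (use that in auto)
    then show ?thesis unfolding phi_def using that by simp
  qed
  define \<iota> :: "int \<times> int + int + int \<Rightarrow> int \<times> int" where
    "\<iota> u = (case u of Inl p \<Rightarrow> p | Inr (Inl i) \<Rightarrow> (i, int h) | Inr (Inr j) \<Rightarrow> (int g, j))" for u
  have Icases: "(\<exists>i j. u = Inl (i,j) \<and> i \<in> {- int k..int g - 1} \<and> j \<in> {- int l..int h - 1})
      \<or> (\<exists>i. u = Inr (Inl i) \<and> i \<in> {- int k..int g - 1}) \<or> (\<exists>j. u = Inr (Inr j) \<and> j \<in> {- int l..int h - 1})"
    if "u \<in> I" for u
    using that unfolding I_def zb_index_def by auto
  have ZBT: "ZB u = T (\<iota> u)" if u: "u \<in> I" for u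
  proof -
    consider (1) i j where "u = Inl (i,j)" "i \<in> {- int k..int g - 1}" "j \<in> {- int l..int h - 1}"
      | (2) i where "u = Inr (Inl i)" "i \<in> {- int k..int g - 1}"
      | (3) j where "u = Inr (Inr j)" "j \<in> {- int l..int h - 1}"
      using Icases[OF u] by blast
    then show ?thesis
    proof cases
      case 1
      then show ?thesis unfolding ZB_def T_def \<iota>_def by (simp add: hx hy)
    next
      case 2
      have "phi ty d h l (int h) y = 1" for y by (simp add: phi_def)
      then show ?thesis using 2 unfolding ZB_def T_def \<iota>_def by (simp add: hx)
    next
      case 3
      have "phi tx b g k (int g) x = 1" for x by (simp add: phi_def)
      then show ?thesis using 3 unfolding ZB_def T_def \<iota>_def by (simp add: hy)
    qed
  qed
  have \<iota>I: "\<iota> ` I = K0"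
  proof
    show "\<iota> ` I \<subseteq> K0"
    proof
      fix p assume "p \<in> \<iota> ` I"
      then obtain u where u: "u \<in> I" "p = \<iota> u" by auto
      from Icases[OF u(1)] show "p \<in> K0"
        unfolding u(2) K0_def KK_def Kx_def Ky_def \<iota>_def by auto
    qed
    show "K0 \<subseteq> \<iota> ` I"
    proof clarify
      fix i j assume ij: "(i, j) \<in> K0"
      then have r: "i \<in> {- int k..int g}" "j \<in> {- int l..int h}" "(i, j) \<noteq> (int g, int h)"
        unfolding K0_def KK_def Kx_def Ky_def by auto
      show "(i, j) \<in> \<iota> ` I"
      proof (cases "i = int g")
        case True
        then have "j \<in> {- int l..int h - 1}" using r by auto
        then show ?thesis using True unfolding I_def zb_index_def \<iota>_def
          by (intro rev_image_eqI[of "Inr (Inr j)"]) auto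
      next
        case False
        then have i1: "i \<in> {- int k..int g - 1}" using r by auto
        show ?thesis
        proof (cases "j = int h")
          case True
          then show ?thesis using i1 unfolding I_def zb_index_def \<iota>_def
            by (intro rev_image_eqI[of "Inr (Inl i)"]) auto
        next
          case False
          then have "j \<in> {- int l..int h - 1}" using r by auto
          then show ?thesis using i1 unfolding I_def zb_index_def \<iota>_def
            by (intro rev_image_eqI[of "Inl (i, j)"]) auto
        qed
      qed
    qed
  qed
  have inj\<iota>: "inj_on \<iota> I"
  proof (rule inj_onI)
    fix u v assume u: "u \<in> I" and v: "v \<in> I" and e: "\<iota> u = \<iota> v"
    from Icases[OF u] Icases[OF v] e show "u = v" unfolding \<iota>_def by auto
  qed
  have K0KK: "K0 \<subseteq> KK" unfolding K0_def by auto
  have injT0: "inj_on T K0" using injT K0KK by (rule inj_on_subset)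
  have ZBimg: "ZB ` I = T ` K0"
  proof -
    have "ZB ` I = (T \<circ> \<iota>) ` I" using ZBT by (intro image_cong) auto
    also have "\<dots> = T ` K0" unfolding image_comp[symmetric] \<iota>I ..
    finally show ?thesis .
  qed
  have injZB: "inj_on ZB I"
  proof -
    have "inj_on (T \<circ> \<iota>) I" by (rule comp_inj_on[OF inj\<iota>]) (use injT0 \<iota>I in simp)
    moreover have "inj_on ZB I = inj_on (T \<circ> \<iota>) I" using ZBT by (intro inj_on_cong) auto
    ultimately show ?thesis by simp
  qed
  have indT0: "fv.independent (T ` K0)" using indT by (rule fv.independent_mono) (use K0KK in auto)
  have n1: "nat (int g + int k + 1) = g + k + 1"
  proof -
    have "int g + int k + 1 = int (g + k + 1)" by simp
    then show ?thesis by (simp only: nat_int)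
  qed
  have n2: "nat (int h + int l + 1) = h + l + 1"
  proof -
    have "int h + int l + 1 = int (h + l + 1)" by simp
    then show ?thesis by (simp only: nat_int)
  qed
  have cardK: "card KK = (g + k + 1) * (h + l + 1)"
    unfolding KK_def Kx_def Ky_def card_cartesian_product card_atLeastAtMost_int
    using n1 n2 by simp
  have dimZ: "fv.dim Zsp = card KK - 1"
  proof -
    have "fv.dim Zsp = card (T ` K0)" unfolding C7 by (rule fv.dim_span_eq_card_independent[OF indT0])
    also have "\<dots> = card K0" by (rule card_image[OF injT0])
    also have "\<dots> = card KK - 1" unfolding K0_def using finK(1) ghK by simp
    finally show ?thesis .
  qed
  have arith: "(g + k + 1) * (h + l + 1) - 1 = (g + k) * (h + l) + g + k + h + l"
    by (simp add: algebra_simps)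
  show ?thesis
    using injZB ZBimg C7 indT0 dimZ cardK arith fv.span_superset[of "T ` K0"] by auto
qed

end
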